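(* Let $1\le k\le n-1$. Then $\overline{\mathrm{Im}\,R_{n-k}}=\overline{\mathrm{Im}\,(I\circ R_k)}$, closures taken in the maximum norm of $C(G(n,n-k))$.
   Context: $G(n,m)$ is the Grassmannian of $m$-dimensional subspaces of $\mathbb{R}^n$. For $E\in G(n,m)$, $R_mf(E)=\int_{S^{n-1}\cap E}f\,d\sigma_E$ ($\sigma_E$ Haar probability on $S^{n-1}\cap E$), $R_m:C(S^{n-1})\to C(G(n,m))$. $I:C(G(n,k))\to C(G(n,n-k))$ is $I(f)(E)=f(E^\perp)$. *)

theory Defs
  imports "HOL-Probability.Probability"
begin

definition grassmannian :: "nat \<Rightarrow> ('a::euclidean_space) set set" where
  "grassmannian m = {E. subspace E \<and> dim E = m}"

definition haar_sphere :: "('a::euclidean_space) set \<Rightarrow> 'a measure" where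
  "haar_sphere E = (THE \<mu>.
      sets \<mu> = sets (restrict_space borel (sphere 0 1 \<inter> E)) \<and>
      prob_space \<mu> \<and>
      (\<forall>T. orthogonal_transformation T \<and> T ` E = E \<longrightarrow>
         (\<forall>A \<in> sets \<mu>. emeasure \<mu> (T -` A \<inter> space \<mu>) = emeasure \<mu> A)))"

definition radon :: "(('a::euclidean_space) \<Rightarrow> real) \<Rightarrow> 'a set \<Rightarrow> real" where
  "radon f E = integral\<^sup>L (haar_sphere E) f"

definition Csphere :: "(('a::euclidean_space) \<Rightarrow> real) set" where
  "Csphere = {f. continuous_on (sphere 0 1) f}"

definition sup_closure :: "'a set set \<Rightarrow> ('a set \<Rightarrow> real) set \<Rightarrow> ('a set \<Rightarrow> real) set" where
  "sup_closure G S = {g. \<forall>e>0. \<exists>h\<in>S. \<forall>E\<in>G. \<bar>g E - h E\<bar> \<le> e}"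

end

theory Submission
  imports Defs
begin

definition proj :: "'a::euclidean_space set \<Rightarrow> 'a \<Rightarrow> 'a" where
  "proj F x = (SOME y. y \<in> F \<and> x - y \<in> orthogonal_comp F)"

lemma proj_ex:
  fixes F :: "'a::euclidean_space set"
  assumes "subspace F"
  shows "proj F x \<in> F \<and> x - proj F x \<in> orthogonal_comp F"
proof -
  have "x \<in> F + orthogonal_comp F" using subspace_sum_orthogonal_comp[OF assms] by auto
  then obtain a b where "x = a + b" "a \<in> F" "b \<in> orthogonal_comp F" by (rule set_plus_elim)
  then have "\<exists>y. y \<in> F \<and> x - y \<in> orthogonal_comp F" by (intro exI[of _ a]) auto
  then show ?thesis unfolding proj_def by (rule someI_ex)
qed

lemma proj_in: "subspace F \<Longrightarrow> proj F x \<in> F" using proj_ex by blast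
lemma proj_perp: "subspace F \<Longrightarrow> x - proj F x \<in> orthogonal_comp F" using proj_ex by blast

lemma proj_unique:
  fixes F :: "'a::euclidean_space set"
  assumes F: "subspace F" and y: "y \<in> F" "x - y \<in> orthogonal_comp F"
  shows "proj F x = y"
proof -
  have "y - proj F x \<in> F" using F y proj_in subspace_diff by blast
  moreover have "y - proj F x = (x - proj F x) - (x - y)" by simp
  then have "y - proj F x \<in> orthogonal_comp F"
    using proj_perp[OF F] y subspace_diff subspace_orthogonal_comp by metis
  ultimately have "y - proj F x = 0" using orthogonal_Int_0[OF F] by blast
  then show ?thesis by simp
qed

lemma proj_id: "subspace F \<Longrightarrow> y \<in> F \<Longrightarrow> proj F y = y"
  by (rule proj_unique) (auto simp: orthogonal_comp_def orthogonal_def)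

lemma orth_compD: "z \<in> orthogonal_comp F \<Longrightarrow> y \<in> F \<Longrightarrow> y \<bullet> z = 0"
  by (auto simp: orthogonal_comp_def orthogonal_def)

lemma proj_inner: "subspace F \<Longrightarrow> y \<in> F \<Longrightarrow> a \<bullet> y = proj F a \<bullet> y"
proof -
  assume F: "subspace F" and y: "y \<in> F"
  have "y \<bullet> (a - proj F a) = 0" using orth_compD[OF proj_perp[OF F] y] .
  then show ?thesis by (simp add: inner_diff_right inner_commute)
qed

lemma proj_linear: "subspace F \<Longrightarrow> linear (proj F)"
proof (rule linearI)
  assume F: "subspace F"
  fix x y :: 'a
  show "proj F (x + y) = proj F x + proj F y"
  proof (rule proj_unique[OF F])
    show "proj F x + proj F y \<in> F" using F proj_in subspace_add by blast
    have "x + y - (proj F x + proj F y) = (x - proj F x) + (y - proj F y)" by simp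
    then show "x + y - (proj F x + proj F y) \<in> orthogonal_comp F"
      using proj_perp[OF F] subspace_add subspace_orthogonal_comp by metis
  qed
next
  assume F: "subspace F"
  fix c :: real and x :: 'a
  show "proj F (c *\<^sub>R x) = c *\<^sub>R proj F x"
  proof (rule proj_unique[OF F])
    show "c *\<^sub>R proj F x \<in> F" using F proj_in subspace_scale by blast
    have "c *\<^sub>R x - c *\<^sub>R proj F x = c *\<^sub>R (x - proj F x)" by (simp add: algebra_simps)
    then show "c *\<^sub>R x - c *\<^sub>R proj F x \<in> orthogonal_comp F"
      using proj_perp[OF F] subspace_scale subspace_orthogonal_comp by metis
  qed
qed

lemma proj_comp: "subspace F \<Longrightarrow> proj (orthogonal_comp F) a = a - proj F a"
  apply (rule proj_unique[OF subspace_orthogonal_comp])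
   apply (simp add: proj_perp)
  using orthogonal_comp_subset proj_in by fastforce

lemma proj_pyth: "subspace F \<Longrightarrow> (norm a)\<^sup>2 = (norm (proj F a))\<^sup>2 + (norm (a - proj F a))\<^sup>2"
proof -
  assume F: "subspace F"
  have "orthogonal (proj F a) (a - proj F a)"
    using orth_compD[OF proj_perp[OF F] proj_in[OF F]] by (simp add: orthogonal_def)
  from norm_add_Pythagorean[OF this] show ?thesis by simp
qed

lemma proj_comm:
  assumes F: "subspace F" and T: "orthogonal_transformation T" and TF: "T ` F = F"
  shows "proj F (T x) = T (proj F x)"
proof (rule proj_unique[OF F])
  show "T (proj F x) \<in> F" using TF proj_in[OF F] by blast
  have l: "linear T" using T orthogonal_transformation_linear by blast
  have "T x - T (proj F x) = T (x - proj F x)" using linear_diff[OF l] by simp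
  moreover have "T (x - proj F x) \<in> orthogonal_comp F"
    unfolding orthogonal_comp_def orthogonal_def
  proof (safe)
    fix y assume "y \<in> F"
    then obtain z where z: "z \<in> F" "y = T z" using TF by blast
    have "T z \<bullet> T (x - proj F x) = z \<bullet> (x - proj F x)" using T by (simp add: orthogonal_transformation_def)
    also have "\<dots> = 0" using orth_compD[OF proj_perp[OF F] z(1)] .
    finally show "y \<bullet> T (x - proj F x) = 0" using z by simp
  qed
  ultimately show "T x - T (proj F x) \<in> orthogonal_comp F" by simp
qed

lemma dim_orth_comp:
  fixes F :: "'a::euclidean_space set"
  assumes "subspace F"
  shows "dim (orthogonal_comp F) + dim F = DIM('a)"
proof -
  have "dim {y \<in> UNIV. \<forall>x \<in> F. orthogonal x y} + dim F = dim (UNIV::'a set)"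
    by (rule dim_subspace_orthogonal_to_vectors) (auto simp: assms)
  moreover have "{y \<in> UNIV. \<forall>x \<in> F. orthogonal x y} = orthogonal_comp F"
    by (auto simp: orthogonal_comp_def)
  ultimately show ?thesis by simp
qed

lemma householder:
  fixes F :: "'a::euclidean_space set"
  assumes F: "subspace F" and x: "x \<in> F" "norm x = 1" and y: "y \<in> F" "norm y = 1"
  shows "\<exists>T. orthogonal_transformation T \<and> T ` F = F \<and> T x = y"
proof (cases "x = y")
  case True
  then show ?thesis by (intro exI[of _ "\<lambda>z. z"]) auto
next
  case False
  define v where "v = x - y"
  have vF: "v \<in> F" using F x y by (simp add: v_def subspace_diff)
  have vv: "v \<bullet> v \<noteq> 0" using False by (simp add: v_def)
  define k where "k = 2 / (v \<bullet> v)"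
  have k: "k * (v \<bullet> v) = 2" using vv by (simp add: k_def)
  define T where "T z = z - (k * (v \<bullet> z)) *\<^sub>R v" for z
  have lin: "linear T"
  proof (rule linearI)
    fix z w :: 'a and r :: real
    show "T (z + w) = T z + T w" by (simp add: T_def inner_add_right distrib_left scaleR_add_left)
    show "T (r *\<^sub>R z) = r *\<^sub>R T z" by (simp add: T_def scaleR_diff_right)
  qed
  have gen: "(z - a *\<^sub>R v) \<bullet> (w - b *\<^sub>R v) = z \<bullet> w - b * (z \<bullet> v) - a * (v \<bullet> w) + a * b * (v \<bullet> v)"
    for z w a b by (simp add: inner_diff_left inner_diff_right algebra_simps inner_commute)
  have ip: "T z \<bullet> T w = z \<bullet> w" for z w
  proof -
    have "T z \<bullet> T w = z \<bullet> w - (k * (v \<bullet> w)) * (z \<bullet> v) - (k * (v \<bullet> z)) * (v \<bullet> w)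
        + (k * (v \<bullet> z)) * (k * (v \<bullet> w)) * (v \<bullet> v)"
      unfolding T_def by (rule gen)
    also have "(k * (v \<bullet> z)) * (k * (v \<bullet> w)) * (v \<bullet> v) = 2 * k * (v \<bullet> z) * (v \<bullet> w)"
      using k by (simp add: mult_ac)
    finally show ?thesis by (simp add: inner_commute algebra_simps)
  qed
  have ot: "orthogonal_transformation T" using lin ip by (simp add: orthogonal_transformation_def)
  have inv: "T (T z) = z" for z
  proof -
    have "v \<bullet> T z = v \<bullet> z - k * (v \<bullet> z) * (v \<bullet> v)" by (simp add: T_def inner_diff_right)
    also have "\<dots> = - (v \<bullet> z)" using k by (simp add: mult_ac)
    finally have e: "v \<bullet> T z = - (v \<bullet> z)" .
    have "T (T z) = T z - (k * (v \<bullet> T z)) *\<^sub>R v" by (rule T_def)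
    also have "\<dots> = T z + (k * (v \<bullet> z)) *\<^sub>R v" by (simp only: e) simp
    also have "\<dots> = z" by (simp add: T_def)
    finally show ?thesis .
  qed
  have TF: "T ` F \<subseteq> F"
  proof
    fix u assume "u \<in> T ` F"
    then obtain z where "z \<in> F" "u = T z" by blast
    then show "u \<in> F" unfolding T_def using vF F by (simp add: subspace_diff subspace_scale)
  qed
  have "F \<subseteq> T ` F" using TF inv by (metis image_eqI subsetD subsetI)
  then have "T ` F = F" using TF by blast
  moreover have "T x = y"
  proof -
    have xx: "x \<bullet> x = 1" "y \<bullet> y = 1" using x y by (simp_all add: dot_square_norm)
    have "v \<bullet> v = 2 * (v \<bullet> x)"
      using xx by (simp add: v_def inner_diff_left inner_diff_right inner_commute)
    then have "k * (v \<bullet> x) = 1" using k by simp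
    then show ?thesis by (simp add: T_def v_def)
  qed
  ultimately show ?thesis using ot by blast
qed

lemma orth_map_subspaces:
  fixes F0 F :: "'a::euclidean_space set"
  assumes F0: "subspace F0" and F: "subspace F" and d: "dim F0 = dim F"
  shows "\<exists>T. orthogonal_transformation T \<and> T ` F0 = F"
proof -
  obtain f where f: "linear f" "f ` F0 = F" "\<And>x. x \<in> F0 \<Longrightarrow> norm (f x) = norm x"
    using isometry_subspaces[OF F0 F d] by blast
  have d2: "dim (orthogonal_comp F0) = dim (orthogonal_comp F)"
    using dim_orth_comp[OF F0] dim_orth_comp[OF F] d by simp
  obtain g where g: "linear g" "g ` orthogonal_comp F0 = orthogonal_comp F"
      "\<And>x. x \<in> orthogonal_comp F0 \<Longrightarrow> norm (g x) = norm x"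
    using isometry_subspaces[OF subspace_orthogonal_comp subspace_orthogonal_comp d2] by blast
  define T where "T x = f (proj F0 x) + g (x - proj F0 x)" for x
  have lp: "linear (proj F0)" using proj_linear[OF F0] .
  have lin: "linear T" unfolding T_def
    by (intro linear_compose_add linear_compose[OF lp f(1), unfolded o_def]
        linear_compose[OF _ g(1), unfolded o_def] linear_compose_sub linear_ident lp)
  have nT: "norm (T x) = norm x" for x
  proof -
    have a: "f (proj F0 x) \<in> F" using f(2) proj_in[OF F0] by blast
    have b: "g (x - proj F0 x) \<in> orthogonal_comp F" using g(2) proj_perp[OF F0] by blast
    have "orthogonal (f (proj F0 x)) (g (x - proj F0 x))"
      using orth_compD[OF b a] by (simp add: orthogonal_def)
    then have "(norm (T x))\<^sup>2 = (norm (f (proj F0 x)))\<^sup>2 + (norm (g (x - proj F0 x)))\<^sup>2"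
      unfolding T_def by (rule norm_add_Pythagorean)
    also have "\<dots> = (norm (proj F0 x))\<^sup>2 + (norm (x - proj F0 x))\<^sup>2"
      using f(3)[OF proj_in[OF F0]] g(3)[OF proj_perp[OF F0]] by simp
    also have "\<dots> = (norm x)\<^sup>2" by (rule proj_pyth[OF F0, symmetric])
    finally have "(norm (T x))\<^sup>2 = (norm x)\<^sup>2" .
    then show ?thesis using power2_eq_imp_eq norm_ge_zero by blast
  qed
  have "T ` F0 = f ` F0"
  proof -
    have "T x = f x" if "x \<in> F0" for x
      using that proj_id[OF F0 that] linear_0[OF g(1)] by (simp add: T_def)
    then show ?thesis by (rule image_cong[OF refl])
  qed
  moreover have "orthogonal_transformation T" unfolding orthogonal_transformation using lin nT by blast
  ultimately show ?thesis using f(2) by metis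
qed

lemma orth_map_subspaces_pt:
  fixes F0 F :: "'a::euclidean_space set"
  assumes F0: "subspace F0" and F: "subspace F" and d: "dim F0 = dim F"
    and e: "e \<in> F0" "norm e = 1" and b: "b \<in> F" "norm b = 1"
  shows "\<exists>T. orthogonal_transformation T \<and> T ` F0 = F \<and> T e = b"
proof -
  obtain T1 where T1: "orthogonal_transformation T1" "T1 ` F0 = F"
    using orth_map_subspaces[OF F0 F d] by blast
  have "T1 e \<in> F" "norm (T1 e) = 1" using T1 e by (auto simp: orthogonal_transformation_norm)
  then obtain H where H: "orthogonal_transformation H" "H ` F = F" "H (T1 e) = b"
    using householder[OF F _ _ b] by blast
  have "orthogonal_transformation (H \<circ> T1)" using H(1) T1(1) by (rule orthogonal_transformation_compose)
  moreover have "(H \<circ> T1) ` F0 = F"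
  proof -
    have "(H \<circ> T1) ` F0 = H ` (T1 ` F0)" by (rule image_comp[symmetric])
    then show ?thesis using H(2) T1(2) by simp
  qed
  moreover have "(H \<circ> T1) e = b" using H(3) by simp
  ultimately show ?thesis by blast
qed

lemma int_cont:
  fixes h :: "'a::euclidean_space \<Rightarrow> real"
  assumes "prob_space M" "sets M = sets borel" "continuous_on UNIV h" "\<And>x. \<bar>h x\<bar> \<le> C"
  shows "integrable M h"
proof -
  interpret prob_space M by fact
  have "h \<in> borel_measurable M"
    using borel_measurable_continuous_onI[OF assms(3)] measurable_cong_sets[OF assms(2) refl] by blast
  then show ?thesis by (intro integrable_const_bound[where B=C]) (auto simp: assms(4))
qed

lemma inv_int:
  fixes h :: "'a::euclidean_space \<Rightarrow> real"
  assumes sM: "sets M = sets borel" and T: "T \<in> measurable borel borel" and d: "distr M borel T = M"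
    and h: "h \<in> borel_measurable borel"
  shows "(\<integral>x. h (T x) \<partial>M) = integral\<^sup>L M h"
proof -
  have Tm: "T \<in> measurable M borel" using T measurable_cong_sets[OF sM refl] by blast
  have "integral\<^sup>L (distr M borel T) h = (\<integral>x. h (T x) \<partial>M)" by (rule integral_distr[OF Tm h])
  then show ?thesis using d by simp
qed

lemma U1:
  fixes \<mu> \<nu> :: "'a::euclidean_space measure" and S :: "'a set" and f :: "'a \<Rightarrow> real"
  assumes sM: "sets \<mu> = sets borel" and sN: "sets \<nu> = sets borel"
    and pM: "prob_space \<mu>" and pN: "prob_space \<nu>"
    and S: "compact S" and aM: "AE x in \<mu>. x \<in> S" and aN: "AE x in \<nu>. x \<in> S"
    and tr: "\<And>x y. x \<in> S \<Longrightarrow> y \<in> S \<Longrightarrow> \<exists>T. (\<forall>u v. dist (T u) (T v) = dist u v) \<and> T x = y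
              \<and> T \<in> measurable borel borel \<and> distr \<mu> borel T = \<mu> \<and> distr \<nu> borel T = \<nu>"
    and f: "continuous_on UNIV f" and fB: "\<And>x. \<bar>f x\<bar> \<le> B"
  shows "integral\<^sup>L \<mu> f = integral\<^sup>L \<nu> f"
proof -
  interpret M: prob_space \<mu> by fact
  interpret N: prob_space \<nu> by fact
  interpret P: pair_sigma_finite \<mu> \<nu>
    by (intro pair_sigma_finite.intro prob_space_imp_sigma_finite pM pN)
  have "S \<noteq> {}"
  proof
    assume "S = {}"
    then have "AE x in \<mu>. False" using aM by simp
    then show False by simp
  qed
  then obtain x0 where x0: "x0 \<in> S" by blast
  have sP: "sets (\<mu> \<Otimes>\<^sub>M \<nu>) = sets (borel :: ('a \<times> 'a) measure)"
  proof -
    have "sets (\<mu> \<Otimes>\<^sub>M \<nu>) = sets (borel \<Otimes>\<^sub>M borel :: ('a \<times> 'a) measure)"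
      by (rule sets_pair_measure_cong[OF sM sN])
    then show ?thesis by (metis borel_prod)
  qed
  have fP: "finite_measure (\<mu> \<Otimes>\<^sub>M \<nu>)" using prob_space_pair[OF pM pN] by (simp add: prob_space_def)
  have key: "\<bar>integral\<^sup>L \<mu> f - integral\<^sup>L \<nu> f\<bar> \<le> e" if e: "e > 0" for e
  proof -
    have "uniformly_continuous_on S f"
      using compact_uniformly_continuous[OF continuous_on_subset[OF f] S] by simp
    then obtain \<delta> where d: "\<delta> > 0" and dU: "\<And>x y. x \<in> S \<Longrightarrow> y \<in> S \<Longrightarrow> dist y x < \<delta> \<Longrightarrow> dist (f y) (f x) < e"
      using e unfolding uniformly_continuous_on_def by metis
    define K where "K x y = max 0 (\<delta> - dist x y)" for x y :: 'a
    have K0: "0 \<le> K x y" for x y by (simp add: K_def)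
    have Kd: "K x y \<le> \<delta>" for x y using d by (simp add: K_def)
    have Ks: "K x y = K y x" for x y by (simp add: K_def dist_commute)
    have Kp: "K x y > 0 \<Longrightarrow> dist x y < \<delta>" for x y by (simp add: K_def)
    have Kc: "continuous_on UNIV (\<lambda>y. K x y)" for x unfolding K_def by (intro continuous_intros)
    have Kc2: "continuous_on UNIV (\<lambda>p. K (fst p) (snd p) * g (snd p))" if "continuous_on UNIV g" for g
      unfolding K_def by (intro continuous_intros continuous_on_compose2[OF that]) auto
    define cM where "cM x = (\<integral>y. K x y \<partial>\<mu>)" for x
    define cN where "cN x = (\<integral>y. K x y \<partial>\<nu>)" for x
    have intK: "integrable \<mu> (K x)" "integrable \<nu> (K x)" for x
      using int_cont[OF pM sM Kc, of x \<delta>] int_cont[OF pN sN Kc, of x \<delta>] K0 Kd by auto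
    have constc: "cM x = cM x' \<and> cN x = cN x'" if xs: "x \<in> S" "x' \<in> S" for x x'
    proof -
      obtain T where T: "\<forall>u v. dist (T u) (T v) = dist u v" "T x = x'" "T \<in> measurable borel borel"
        "distr \<mu> borel T = \<mu>" "distr \<nu> borel T = \<nu>" using tr[OF xs] by blast
      have hm: "K x' \<in> borel_measurable borel" using borel_measurable_continuous_onI[OF Kc] .
      have KT: "K x' (T y) = K x y" for y using T(1,2) by (metis K_def)
      have "cM x' = (\<integral>y. K x' (T y) \<partial>\<mu>)" unfolding cM_def using inv_int[OF sM T(3) T(4) hm] by simp
      moreover have "cN x' = (\<integral>y. K x' (T y) \<partial>\<nu>)" unfolding cN_def using inv_int[OF sN T(3) T(5) hm] by simp
      ultimately show ?thesis unfolding cM_def cN_def KT by simp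
    qed
    have Klip: "\<bar>K y x - K y' x\<bar> \<le> dist y y'" for x y y'
    proof -
      have "dist y x \<le> dist y y' + dist y' x" "dist y' x \<le> dist y' y + dist y x" by (rule dist_triangle)+
      then show ?thesis unfolding K_def by (simp add: dist_commute max_def abs_if)
    qed
    have clip: "\<bar>(\<integral>x. K y x \<partial>M) - (\<integral>x. K y' x \<partial>M)\<bar> \<le> dist y y'"
      if pMM: "prob_space M" and sMM: "sets M = sets borel" for M y y'
    proof -
      interpret MM: prob_space M by fact
      have i1: "integrable M (K y)" "integrable M (K y')"
        using int_cont[OF pMM sMM Kc, of _ \<delta>] K0 Kd by auto
      have "\<bar>(\<integral>x. K y x \<partial>M) - (\<integral>x. K y' x \<partial>M)\<bar> = \<bar>\<integral>x. K y x - K y' x \<partial>M\<bar>"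
        using i1 by simp
      also have "\<dots> \<le> (\<integral>x. \<bar>K y x - K y' x\<bar> \<partial>M)" by (rule integral_abs_bound)
      also have "\<dots> \<le> (\<integral>x. dist y y' \<partial>M)" using i1 Klip by (intro integral_mono) auto
      also have "\<dots> = dist y y'" by (simp add: MM.prob_space)
      finally show ?thesis .
    qed
    have ccont: "continuous_on UNIV (\<lambda>y. (\<integral>x. K y x \<partial>M))"
      if pMM: "prob_space M" and sMM: "sets M = sets borel" for M
    proof (rule lipschitz_on_continuous_on)
      show "1-lipschitz_on UNIV (\<lambda>y. (\<integral>x. K y x \<partial>M))"
        using clip[OF pMM sMM] by (intro lipschitz_onI) (auto simp: dist_real_def)
    qed
    have cMm: "cM \<in> borel_measurable \<nu>"
      using borel_measurable_continuous_onI[OF ccont[OF pM sM]] measurable_cong_sets[OF sN refl]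
      unfolding cM_def by blast
    have cNm: "cN \<in> borel_measurable \<mu>"
      using borel_measurable_continuous_onI[OF ccont[OF pN sN]] measurable_cong_sets[OF sM refl]
      unfolding cN_def by blast
    have fm: "f \<in> borel_measurable \<nu>"
      using borel_measurable_continuous_onI[OF f] measurable_cong_sets[OF sN refl] by blast
    have fub: "(\<integral>y. g y * cM y \<partial>\<nu>) = (\<integral>x. (\<integral>y. K x y * g y \<partial>\<nu>) \<partial>\<mu>)"
      and intfst: "integrable \<mu> (\<lambda>x. \<integral>y. K x y * g y \<partial>\<nu>)"
      if g: "continuous_on UNIV g" and gB: "\<And>x. \<bar>g x\<bar> \<le> Bg" for g Bg
    proof -
      define G where "G p = K (fst p) (snd p) * g (snd p)" for p
      have Gm: "G \<in> borel_measurable (\<mu> \<Otimes>\<^sub>M \<nu>)"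
        using borel_measurable_continuous_onI[OF Kc2[OF g]] measurable_cong_sets[OF sP refl]
        unfolding G_def by blast
      have "\<bar>G p\<bar> \<le> \<delta> * Bg" for p
      proof -
        have "\<bar>G p\<bar> = K (fst p) (snd p) * \<bar>g (snd p)\<bar>" using K0 by (simp add: G_def abs_mult)
        also have "\<dots> \<le> \<delta> * Bg" using Kd K0 gB d by (intro mult_mono) (auto intro: order_trans[OF abs_ge_zero gB])
        finally show ?thesis .
      qed
      then have Gi: "integrable (\<mu> \<Otimes>\<^sub>M \<nu>) G"
        using Gm by (intro finite_measure.integrable_const_bound[where B="\<delta> * Bg"])
          (auto intro!: fP)
      have e1: "(\<integral>x. G (x, y) \<partial>\<mu>) = g y * cM y" for y
      proof -
        have "(\<integral>x. G (x, y) \<partial>\<mu>) = (\<integral>x. K y x * g y \<partial>\<mu>)" unfolding G_def using Ks by simp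
        also have "\<dots> = cM y * g y" unfolding cM_def by (rule integral_mult_left_zero)
        finally show ?thesis by simp
      qed
      have "(\<integral>y. g y * cM y \<partial>\<nu>) = (\<integral>y. (\<integral>x. G (x, y) \<partial>\<mu>) \<partial>\<nu>)" by (simp only: e1)
      also have "\<dots> = (\<integral>x. (\<integral>y. G (x, y) \<partial>\<nu>) \<partial>\<mu>)"
        using P.Fubini_integral[of "\<lambda>x y. G (x, y)"] Gi by simp
      finally show "(\<integral>y. g y * cM y \<partial>\<nu>) = (\<integral>x. (\<integral>y. K x y * g y \<partial>\<nu>) \<partial>\<mu>)"
        unfolding G_def by simp
      show "integrable \<mu> (\<lambda>x. \<integral>y. K x y * g y \<partial>\<nu>)"
        using P.integrable_fst'[OF Gi] unfolding G_def by simp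
    qed
    define c where "c = cN x0"
    have cNc1: "AE x in \<mu>. cN x = c" using aM
    proof (eventually_elim)
      case (elim x) then show ?case using constc[OF elim x0] c_def by simp
    qed
    have cNc2: "AE x in \<nu>. cN x = c" using aN
    proof (eventually_elim)
      case (elim x) then show ?case using constc[OF elim x0] c_def by simp
    qed
    have cMc: "AE x in \<nu>. cM x = cM x0" using aN
    proof (eventually_elim)
      case (elim x) then show ?case using constc[OF elim x0] by simp
    qed
    have cpos: "c > 0"
    proof (rule ccontr)
      assume "\<not> c > 0"
      then have c0: "c \<le> 0" by simp
      have z: "AE y in \<nu>. K x y = 0" if "x \<in> S" for x
      proof -
        have "cN x = c" using constc[OF that x0] c_def by simp
        moreover have "cN x \<ge> 0" unfolding cN_def using K0 by (simp add: integral_nonneg)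
        ultimately have "cN x = 0" using c0 by simp
        then show ?thesis unfolding cN_def using integral_nonneg_eq_0_iff_AE[OF intK(2)] K0 by simp
      qed
      have cov: "S \<subseteq> \<Union> ((\<lambda>x. ball x (\<delta>/2)) ` S)" using d by force
      obtain C where C: "C \<subseteq> S" "finite C" "S \<subseteq> \<Union> ((\<lambda>x. ball x (\<delta>/2)) ` C)"
        using compactE_image[OF S _ cov] by blast
      have "AE y in \<nu>. \<forall>x\<in>C. K x y = 0" using C(1,2) z by (intro AE_finite_allI) auto
      then have "AE y in \<nu>. False" using aN
      proof (eventually_elim)
        case (elim y)
        then obtain x where x: "x \<in> C" "dist x y < \<delta>/2" using C(3) by auto
        then have "K x y > 0" using d by (simp add: K_def)
        then show False using elim x by simp
      qed
      then show False by simp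
    qed
    have cMx0: "cM x0 = c"
    proof -
      have "(\<integral>y. 1 * cM y \<partial>\<nu>) = (\<integral>x. (\<integral>y. K x y * 1 \<partial>\<nu>) \<partial>\<mu>)"
        by (rule fub[of "\<lambda>_. 1" 1]) auto
      moreover have "(\<integral>y. 1 * cM y \<partial>\<nu>) = (\<integral>y. cM x0 \<partial>\<nu>)" using cMc cMm by (intro integral_cong_AE) auto
      moreover have "(\<integral>x. (\<integral>y. K x y * 1 \<partial>\<nu>) \<partial>\<mu>) = (\<integral>x. cN x \<partial>\<mu>)" unfolding cN_def by simp
      moreover have "(\<integral>x. cN x \<partial>\<mu>) = (\<integral>x. c \<partial>\<mu>)"
        using cNc1 cNm by (intro integral_cong_AE) auto
      ultimately show ?thesis by (simp add: M.prob_space N.prob_space)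
    qed
    define \<Phi> where "\<Phi> x = (\<integral>y. K x y * f y \<partial>\<nu>)" for x
    have f1: "c * integral\<^sup>L \<nu> f = integral\<^sup>L \<mu> \<Phi>"
    proof -
      have "(\<integral>y. f y * cM y \<partial>\<nu>) = integral\<^sup>L \<mu> \<Phi>" unfolding \<Phi>_def by (rule fub[OF f fB])
      moreover have "(\<integral>y. f y * cM y \<partial>\<nu>) = (\<integral>y. f y * c \<partial>\<nu>)" using cMc cMx0 cMm fm by (intro integral_cong_AE) auto
      ultimately show ?thesis by (simp add: mult.commute)
    qed
    have iPhi: "integrable \<mu> \<Phi>" unfolding \<Phi>_def by (rule intfst[OF f fB])
    have ifM: "integrable \<mu> f" "integrable \<nu> f" using int_cont[OF pM sM f fB] int_cont[OF pN sN f fB] by auto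
    have bnd: "\<bar>\<Phi> x - c * f x\<bar> \<le> e * c" if x: "x \<in> S" for x
    proof -
      have cx: "cN x = c" using constc[OF x x0] c_def by simp
      have iKf: "integrable \<nu> (\<lambda>y. K x y * f y)"
      proof (rule int_cont[OF pN sN continuous_on_mult[OF Kc f], where C="\<delta> * B"])
        fix y
        have "\<bar>K x y * f y\<bar> = K x y * \<bar>f y\<bar>" using K0 by (simp add: abs_mult)
        also have "\<dots> \<le> \<delta> * B" using K0 Kd fB d by (intro mult_mono) (auto intro: order_trans[OF abs_ge_zero fB])
        finally show "\<bar>K x y * f y\<bar> \<le> \<delta> * B" .
      qed
      have "\<Phi> x - c * f x = (\<integral>y. K x y * f y - K x y * f x \<partial>\<nu>)"
        using iKf intK(2)[of x] cx unfolding \<Phi>_def cN_def by (simp add: integral_diff mult.commute)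
      also have "\<bar>\<dots>\<bar> \<le> (\<integral>y. \<bar>K x y * f y - K x y * f x\<bar> \<partial>\<nu>)" by (rule integral_abs_bound)
      also have "\<dots> \<le> (\<integral>y. e * K x y \<partial>\<nu>)"
      proof (rule integral_mono_AE)
        show "integrable \<nu> (\<lambda>y. \<bar>K x y * f y - K x y * f x\<bar>)" using iKf intK(2)[of x] by auto
        show "integrable \<nu> (\<lambda>y. e * K x y)" using intK(2)[of x] by auto
        show "AE y in \<nu>. \<bar>K x y * f y - K x y * f x\<bar> \<le> e * K x y" using aN
        proof (eventually_elim)
          case (elim y)
          show ?case
          proof (cases "K x y > 0")
            case True
            then have "dist y x < \<delta>" using Kp by (simp add: dist_commute)
            then have "\<bar>f y - f x\<bar> < e" using dU[OF x elim] by (simp add: dist_real_def)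
            moreover have "\<bar>K x y * f y - K x y * f x\<bar> = K x y * \<bar>f y - f x\<bar>"
              using K0 by (simp add: abs_mult right_diff_distrib[symmetric])
            ultimately show ?thesis using True by (simp add: mult.commute)
          next
            case False
            then have "K x y = 0" using K0[of x y] by simp
            then show ?thesis by simp
          qed
        qed
      qed
      also have "\<dots> = e * c" using cx unfolding cN_def by simp
      finally show ?thesis .
    qed
    have "\<bar>integral\<^sup>L \<mu> \<Phi> - c * integral\<^sup>L \<mu> f\<bar> \<le> e * c"
    proof -
      have "integral\<^sup>L \<mu> \<Phi> - c * integral\<^sup>L \<mu> f = (\<integral>x. \<Phi> x - c * f x \<partial>\<mu>)"
        using iPhi ifM by simp
      also have "\<bar>\<dots>\<bar> \<le> (\<integral>x. \<bar>\<Phi> x - c * f x\<bar> \<partial>\<mu>)" by (rule integral_abs_bound)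
      also have "\<dots> \<le> (\<integral>x. e * c \<partial>\<mu>)"
        using aM bnd iPhi ifM by (intro integral_mono_AE) (auto elim!: AE_mp)
      also have "\<dots> = e * c" by (simp add: M.prob_space)
      finally show ?thesis .
    qed
    moreover have "\<bar>integral\<^sup>L \<mu> \<Phi> - c * integral\<^sup>L \<mu> f\<bar> = c * \<bar>integral\<^sup>L \<nu> f - integral\<^sup>L \<mu> f\<bar>"
      unfolding f1[symmetric] using cpos by (simp add: abs_mult right_diff_distrib[symmetric])
    ultimately have "c * \<bar>integral\<^sup>L \<nu> f - integral\<^sup>L \<mu> f\<bar> \<le> c * e" by (simp add: mult.commute)
    then show ?thesis using cpos by (simp add: abs_minus_commute)
  qed
  show ?thesis
  proof (rule ccontr)
    assume "integral\<^sup>L \<mu> f \<noteq> integral\<^sup>L \<nu> f"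
    then have "\<bar>integral\<^sup>L \<mu> f - integral\<^sup>L \<nu> f\<bar> > 0" by simp
    from key[OF half_gt_zero[OF this]] this show False by simp
  qed
qed

definition haar_prop :: "'a::euclidean_space set \<Rightarrow> 'a measure \<Rightarrow> bool" where
  "haar_prop E \<mu> \<longleftrightarrow> sets \<mu> = sets (restrict_space borel (sphere 0 1 \<inter> E)) \<and> prob_space \<mu> \<and>
      (\<forall>T. orthogonal_transformation T \<and> T ` E = E \<longrightarrow>
         (\<forall>A \<in> sets \<mu>. emeasure \<mu> (T -` A \<inter> space \<mu>) = emeasure \<mu> A))"

lemma haar_sphere_eq: "haar_sphere E = (THE \<mu>. haar_prop E \<mu>)"
  by (simp add: haar_sphere_def haar_prop_def)

lemma orth_meas: "orthogonal_transformation (T::'a::euclidean_space \<Rightarrow> 'a) \<Longrightarrow> T \<in> measurable borel borel"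
  by (intro borel_measurable_continuous_onI linear_continuous_on)
     (metis orthogonal_transformation_linear linear_conv_bounded_linear)

lemma orth_S: "orthogonal_transformation T \<Longrightarrow> T ` E = E \<Longrightarrow> x \<in> sphere 0 1 \<inter> E \<Longrightarrow> T x \<in> sphere 0 1 \<inter> E"
  by (auto simp: orthogonal_transformation_norm)

lemma haar_space: "haar_prop E \<mu> \<Longrightarrow> space \<mu> = sphere 0 1 \<inter> E"
proof -
  assume "haar_prop E \<mu>"
  then have "sets \<mu> = sets (restrict_space borel (sphere 0 1 \<inter> E))" by (simp add: haar_prop_def)
  then have "space \<mu> = space (restrict_space borel (sphere 0 1 \<inter> E))" by (rule sets_eq_imp_space_eq)
  then show ?thesis by (simp add: space_restrict_space)
qed

lemma id_meas: "sets \<mu> = sets (restrict_space borel S) \<Longrightarrow> (\<lambda>x. x) \<in> measurable \<mu> borel"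
  using measurable_cong_sets[OF _ refl, of \<mu> "restrict_space borel S" borel]
    measurable_restrict_space1[OF measurable_ident_sets[OF refl, of borel]] by metis

lemma ext_props:
  fixes \<mu> :: "'a::euclidean_space measure"
  assumes E: "subspace E" and h: "haar_prop E \<mu>"
  defines "\<mu>' \<equiv> distr \<mu> borel (\<lambda>x. x)"
  shows "sets \<mu>' = sets borel" "prob_space \<mu>'" "AE x in \<mu>'. x \<in> sphere 0 1 \<inter> E"
    "\<And>A. A \<in> sets \<mu> \<Longrightarrow> emeasure \<mu> A = emeasure \<mu>' A"
    "\<And>T. orthogonal_transformation T \<Longrightarrow> T ` E = E \<Longrightarrow> distr \<mu>' borel T = \<mu>'"
proof -
  let ?S = "sphere 0 1 \<inter> E"
  have sm: "sets \<mu> = sets (restrict_space borel ?S)" and pm: "prob_space \<mu>"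
    and inv: "\<And>T A. orthogonal_transformation T \<Longrightarrow> T ` E = E \<Longrightarrow> A \<in> sets \<mu> \<Longrightarrow>
        emeasure \<mu> (T -` A \<inter> space \<mu>) = emeasure \<mu> A"
    using h unfolding haar_prop_def by auto
  have sp: "space \<mu> = ?S" using haar_space[OF h] .
  have im: "(\<lambda>x. x) \<in> measurable \<mu> borel" by (rule id_meas[OF sm])
  have Sb: "?S \<in> sets borel" by (intro borel_closed closed_Int closed_sphere closed_subspace[OF E])
  have setsm: "A \<in> sets \<mu> \<longleftrightarrow> A \<subseteq> ?S \<and> A \<in> sets borel" for A
  proof -
    have "?S \<inter> space borel \<in> sets borel" using Sb by (simp only: space_borel Int_UNIV_right)
    then show ?thesis unfolding sm by (rule sets_restrict_space_iff)
  qed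
  show s1: "sets \<mu>' = sets borel" unfolding \<mu>'_def by simp
  show "prob_space \<mu>'" unfolding \<mu>'_def using prob_space.prob_space_distr[OF pm im] .
  show "AE x in \<mu>'. x \<in> ?S" unfolding \<mu>'_def
  proof (subst AE_distr_iff[OF im])
    show "{x \<in> space borel. x \<in> ?S} \<in> sets borel" using Sb by (simp only: space_borel UNIV_I simp_thms Collect_mem_eq)
    show "AE x in \<mu>. x \<in> ?S" using sp by (intro AE_I2) simp
  qed
  have em: "emeasure \<mu>' A = emeasure \<mu> (A \<inter> ?S)" if "A \<in> sets borel" for A
    unfolding \<mu>'_def using emeasure_distr[OF im that] sp by (simp add: Int_commute)
  show "emeasure \<mu> A = emeasure \<mu>' A" if "A \<in> sets \<mu>" for A
    using that setsm[of A] em[of A] by (simp add: Int_absorb2)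
  show "distr \<mu>' borel T = \<mu>'" if T: "orthogonal_transformation T" "T ` E = E" for T
  proof (rule measure_eqI)
    show "sets (distr \<mu>' borel T) = sets \<mu>'" using s1 by simp
    fix A assume "A \<in> sets (distr \<mu>' borel T)"
    then have A: "A \<in> sets borel" by simp
    have Tm: "T \<in> measurable \<mu>' borel" using orth_meas[OF T(1)] measurable_cong_sets[OF s1 refl] by blast
    have TA: "T -` A \<in> sets borel" using orth_meas[OF T(1)] A by (simp add: measurable_sets_borel)
    have sp': "space \<mu>' = UNIV" unfolding \<mu>'_def by simp
    have "emeasure (distr \<mu>' borel T) A = emeasure \<mu>' (T -` A)" using emeasure_distr[OF Tm A] sp' by simp
    also have "\<dots> = emeasure \<mu> (T -` A \<inter> ?S)" using em[OF TA] .
    also have "T -` A \<inter> ?S = T -` (A \<inter> ?S) \<inter> space \<mu>" using orth_S[OF T] sp by auto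
    also have "emeasure \<mu> \<dots> = emeasure \<mu> (A \<inter> ?S)"
      using inv[OF T, of "A \<inter> ?S"] setsm A Sb by auto
    also have "\<dots> = emeasure \<mu>' A" using em[OF A] by simp
    finally show "emeasure (distr \<mu>' borel T) A = emeasure \<mu>' A" .
  qed
qed

lemma U2:
  fixes \<mu> \<nu> :: "'a::euclidean_space measure"
  assumes sM: "sets \<mu> = sets borel" and sN: "sets \<nu> = sets borel"
    and pM: "prob_space \<mu>" and pN: "prob_space \<nu>"
    and eq: "\<And>f::'a \<Rightarrow> real. continuous_on UNIV f \<Longrightarrow> (\<And>x. \<bar>f x\<bar> \<le> 1) \<Longrightarrow> integral\<^sup>L \<mu> f = integral\<^sup>L \<nu> f"
  shows "\<mu> = \<nu>"
proof -
  interpret M: prob_space \<mu> by fact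
  interpret N: prob_space \<nu> by fact
  have spM: "space \<mu> = UNIV" using sets_eq_imp_space_eq[OF sM] by simp
  have spN: "space \<nu> = UNIV" using sets_eq_imp_space_eq[OF sN] by simp
  have closed_eq: "emeasure \<mu> C = emeasure \<nu> C" if C: "closed C" for C :: "'a set"
  proof (cases "C = {}")
    case True then show ?thesis by simp
  next
    case False
    define g where "g j x = max 0 (1 - real j * infdist x C)" for j :: nat and x
    have gc: "continuous_on UNIV (g j)" for j unfolding g_def by (intro continuous_intros)
    have gb: "\<bar>g j x\<bar> \<le> 1" for j x
      using infdist_nonneg[of x C] by (simp add: g_def)
    have lim: "(\<lambda>j. g j x) \<longlonglongrightarrow> indicator C x" for x
    proof (cases "x \<in> C")
      case True
      then have "infdist x C = 0" using in_closed_iff_infdist_zero[OF C False] by simp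
      then show ?thesis using True by (simp add: g_def)
    next
      case False2: False
      then have dpos: "infdist x C > 0"
        using in_closed_iff_infdist_zero[OF C False] infdist_nonneg[of x C] by simp
      obtain N :: nat where N: "1 / infdist x C < real N" using reals_Archimedean2 by blast
      have "g j x = 0" if "j \<ge> N" for j
      proof -
        have "real N \<le> real j" using that by simp
        moreover have "1 < real N * infdist x C" using N dpos by (simp add: field_simps)
        moreover have "real N * infdist x C \<le> real j * infdist x C"
          using \<open>real N \<le> real j\<close> dpos by (intro mult_right_mono) auto
        ultimately have "1 < real j * infdist x C" by linarith
        then show ?thesis by (simp add: g_def)
      qed
      then have "eventually (\<lambda>j. g j x = 0) sequentially" by (auto simp: eventually_sequentially)
      then show ?thesis using False2 by (simp add: tendsto_eventually)
    qed
    have gm: "g j \<in> borel_measurable M" if "sets M = sets borel" for M j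
      using borel_measurable_continuous_onI[OF gc] measurable_cong_sets[OF that refl] by blast
    have im: "indicator C \<in> borel_measurable M" if "sets M = sets borel" for M
      using borel_measurable_indicator[OF borel_closed[OF C]] measurable_cong_sets[OF that refl] by blast
    have conv: "(\<lambda>j. integral\<^sup>L M (g j)) \<longlonglongrightarrow> measure M C" if pMM: "prob_space M" and sMM: "sets M = sets borel" for M
    proof -
      interpret MM: prob_space M by fact
      have spMM: "space M = UNIV" using sets_eq_imp_space_eq[OF sMM] by simp
      have "(\<lambda>j. integral\<^sup>L M (g j)) \<longlonglongrightarrow> integral\<^sup>L M (indicator C)"
        by (rule integral_dominated_convergence[where w="\<lambda>_. 1"])
           (use im[OF sMM] gm[OF sMM] lim gb in auto)
      then show ?thesis using spMM by simp
    qed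
    have eqj: "integral\<^sup>L \<mu> (g j) = integral\<^sup>L \<nu> (g j)" for j
      by (rule eq) (simp_all only: gc gb)
    have "measure \<mu> C = measure \<nu> C"
      using LIMSEQ_unique[OF conv[OF pM sM]] conv[OF pN sN] eqj by simp
    then show ?thesis by (simp add: M.emeasure_eq_measure N.emeasure_eq_measure)
  qed
  have sb: "sets (borel :: 'a measure) = sigma_sets UNIV (Collect closed)"
    by (subst borel_eq_closed) (simp add: sets_measure_of)
  show ?thesis
  proof (rule measure_eqI_generator_eq[where E="Collect closed" and \<Omega>=UNIV and A="\<lambda>_. UNIV"])
    show "Int_stable (Collect closed :: 'a set set)" by (auto simp: Int_stable_def)
  qed (use sM sN sb closed_eq in auto)
qed

lemma haar_unique:
  fixes E :: "'a::euclidean_space set"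
  assumes E: "subspace E" and h1: "haar_prop E \<mu>" and h2: "haar_prop E \<nu>"
  shows "\<mu> = \<nu>"
proof -
  let ?S = "sphere 0 1 \<inter> E"
  define \<mu>' where "\<mu>' = distr \<mu> borel (\<lambda>x. x)"
  define \<nu>' where "\<nu>' = distr \<nu> borel (\<lambda>x. x)"
  note m = ext_props[OF E h1, folded \<mu>'_def]
  note n = ext_props[OF E h2, folded \<nu>'_def]
  have tr: "\<exists>T. (\<forall>u v. dist (T u) (T v) = dist u v) \<and> T x = y
              \<and> T \<in> measurable borel borel \<and> distr \<mu>' borel T = \<mu>' \<and> distr \<nu>' borel T = \<nu>'"
    if xy: "x \<in> ?S" "y \<in> ?S" for x y
  proof -
    obtain T where T: "orthogonal_transformation T" "T ` E = E" "T x = y"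
      using householder[OF E, of x y] xy by (auto simp: mem_sphere_0)
    have "dist (T u) (T v) = dist u v" for u v
      using T(1) by (simp add: dist_norm orthogonal_transformation_norm
          linear_diff[OF orthogonal_transformation_linear[OF T(1)], symmetric])
    then show ?thesis using T m(5) n(5) orth_meas[OF T(1)] by blast
  qed
  have cS: "compact ?S" using closed_subspace[OF E] by (intro compact_Int_closed) auto
  have "\<mu>' = \<nu>'"
    by (rule U2[OF m(1) n(1) m(2) n(2)], rule U1[OF m(1) n(1) m(2) n(2) cS m(3) n(3) tr]) auto
  show ?thesis
  proof (rule measure_eqI)
    show "sets \<mu> = sets \<nu>" using h1 h2 by (simp add: haar_prop_def)
    fix A assume "A \<in> sets \<mu>"
    moreover then have "A \<in> sets \<nu>" using h1 h2 by (simp add: haar_prop_def)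
    ultimately show "emeasure \<mu> A = emeasure \<nu> A" using m(4) n(4) \<open>\<mu>' = \<nu>'\<close> by simp
  qed
qed

lemma emeasure_lebesgue_borel:
  "S \<in> sets borel \<Longrightarrow> emeasure lebesgue S = emeasure lborel S"
  using emeasure_completion[of S lborel] main_part_sets[of S lborel] by simp

lemma lborel_orth_inv:
  fixes T :: "real^'m::{finite,wellorder} \<Rightarrow> real^'m::_"
  assumes T: "orthogonal_transformation T" and Y: "Y \<in> sets borel" "bounded Y"
  shows "emeasure lborel (T -` Y) = emeasure lborel Y"
proof -
  have Tm: "T \<in> measurable borel borel" by (rule orth_meas[OF T])
  have TY: "T -` Y \<in> sets borel" using Tm Y(1) by (simp add: measurable_sets_borel)
  have iT: "orthogonal_transformation (inv T)" by (rule orthogonal_transformation_inv[OF T])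
  have bij: "bij T" using orthogonal_transformation_bij[OF T] .
  have pre: "T -` Y = inv T ` Y" using bij by (simp add: bij_vimage_eq_inv_image)
  have Yl: "Y \<in> lmeasurable"
  proof -
    obtain r where r: "Y \<subseteq> ball 0 r" using Y(2) bounded_subset_ballD by blast
    have b: "ball (0::real^'m::_) r \<in> lmeasurable" by (rule lmeasurable_ball)
    have "Y \<in> sets lborel" using Y(1) by simp
    then have "Y \<in> sets lebesgue" by (rule sets_completionI_sets)
    then show ?thesis by (rule fmeasurableI2[OF b r])
  qed
  have "measure lebesgue (inv T ` Y) = measure lebesgue Y" by (rule measure_orthogonal_image[OF iT Yl])
  moreover have "inv T ` Y \<in> lmeasurable" by (rule measurable_orthogonal_image[OF iT Yl])
  ultimately have "emeasure lebesgue (inv T ` Y) = emeasure lebesgue Y"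
    using Yl by (simp add: emeasure_eq_measure2)
  then show ?thesis using emeasure_lebesgue_borel[OF TY] emeasure_lebesgue_borel[OF Y(1)] pre by simp
qed

lemma haar_exists_wo:
  fixes E :: "(real^'m::{finite,wellorder}) set"
  assumes E: "subspace E" and dE: "\<exists>e\<in>E. e \<noteq> 0"
  shows "\<exists>\<mu>. haar_prop E \<mu>"
proof -
  let ?S = "sphere 0 1 \<inter> E"
  obtain e where e: "e \<in> E" "e \<noteq> 0" using dE by blast
  define u where "u = e /\<^sub>R norm e"
  have u: "u \<in> E" "norm u = 1" using e E by (auto simp: u_def subspace_scale)
  have uS: "u \<in> ?S" using u by simp
  define B where "B = {x \<in> ball 0 1. proj E x \<noteq> 0}"
  define g where "g x = (if proj E x = 0 then u else proj E x /\<^sub>R norm (proj E x))" for x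
  have lp: "linear (proj E)" by (rule proj_linear[OF E])
  have cp: "continuous_on UNIV (proj E)" using lp by (simp add: linear_continuous_on linear_conv_bounded_linear)
  have pm: "proj E \<in> borel_measurable borel" using borel_measurable_continuous_onI[OF cp] .
  have Bb: "B \<in> sets borel"
  proof -
    have "B = ball 0 1 \<inter> proj E -` (UNIV - {0})" by (auto simp: B_def)
    moreover have "open (proj E -` (UNIV - {0}))"
      using open_vimage[of "UNIV - {0}" "proj E"] cp by auto
    ultimately have "open B" by auto
    then show ?thesis by simp
  qed
  have Bbd: "bounded B" by (rule bounded_subset[of "ball 0 1"]) (auto simp: B_def)
  have Bfin: "emeasure lborel B \<noteq> \<infinity>"
  proof -
    have "emeasure lborel B \<le> emeasure lborel (ball (0::real^'m::_) 1)"
      using Bb by (intro emeasure_mono) (auto simp: B_def)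
    then show ?thesis using emeasure_lborel_ball_finite[of "0::real^'m::_" 1] by (auto simp: top_unique)
  qed
  have Bpos: "emeasure lborel B \<noteq> 0"
  proof -
    have sub: "ball (u /\<^sub>R 2) (1/4) \<subseteq> B"
    proof
      fix z assume z: "z \<in> ball (u /\<^sub>R 2) (1/4)"
      have "norm z \<le> norm (u /\<^sub>R 2) + norm (z - u /\<^sub>R 2)" by (rule norm_triangle_sub)
      also have "\<dots> < 1" using z u by (simp add: dist_norm norm_minus_commute)
      finally have z1: "z \<in> ball 0 1" by simp
      have "proj E (z - u /\<^sub>R 2) = proj E z - u /\<^sub>R 2"
        using linear_diff[OF lp] proj_id[OF E] u E by (simp add: subspace_scale)
      moreover have "norm (proj E (z - u /\<^sub>R 2)) \<le> norm (z - u /\<^sub>R 2)"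
        using proj_pyth[OF E, of "z - u /\<^sub>R 2"]
        by (metis abs_norm_cancel le_add_same_cancel1 norm_ge_zero power2_le_imp_le zero_le_power2)
      ultimately have "norm (proj E z - u /\<^sub>R 2) < 1/4" using z by (simp add: dist_norm norm_minus_commute)
      then have "proj E z \<noteq> 0" using u by auto
      then show "z \<in> B" using z1 by (simp add: B_def)
    qed
    have "emeasure lborel (ball (u /\<^sub>R 2) (1/4::real)) > 0"
      by (simp add: emeasure_ball unit_ball_vol_pos)
    moreover have "emeasure lborel (ball (u /\<^sub>R 2) (1/4::real)) \<le> emeasure lborel B"
      using sub Bb by (intro emeasure_mono) auto
    ultimately show ?thesis by auto
  qed
  define U where "U = uniform_measure lborel B"
  have pU: "prob_space U" unfolding U_def by (rule prob_space_uniform_measure[OF Bpos Bfin])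
  have sU: "sets U = sets borel" by (simp add: U_def)
  have spU: "space U = UNIV" by (simp add: U_def)
  have gS: "g x \<in> ?S" for x using uS proj_in[OF E, of x] E by (auto simp: g_def subspace_scale)
  have gm: "g \<in> borel_measurable borel" unfolding g_def
    using pm by measurable
  have gmU: "g \<in> measurable U (restrict_space borel ?S)"
    by (rule measurable_restrict_space2) (use gS gm measurable_cong_sets[OF sU refl] in auto)
  define \<sigma> where "\<sigma> = distr U (restrict_space borel ?S) g"
  have "haar_prop E \<sigma>"
    unfolding haar_prop_def
  proof (intro conjI allI impI ballI)
    show "sets \<sigma> = sets (restrict_space borel ?S)" by (simp add: \<sigma>_def)
    show "prob_space \<sigma>" unfolding \<sigma>_def by (rule prob_space.prob_space_distr[OF pU gmU])
    fix T A assume T: "orthogonal_transformation T \<and> T ` E = E" and A: "A \<in> sets \<sigma>"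
    have TT: "orthogonal_transformation T" "T ` E = E" using T by auto
    have Ar: "A \<in> sets (restrict_space borel ?S)" using A by (simp add: \<sigma>_def)
    have sps: "space \<sigma> = ?S" by (simp add: \<sigma>_def space_restrict_space)
    have Sb: "?S \<in> sets borel" by (intro borel_closed closed_Int closed_sphere closed_subspace[OF E])
    have A': "T -` A \<inter> ?S \<in> sets (restrict_space borel ?S)"
    proof -
      have "T -` A \<inter> ?S = T -` A \<inter> space (restrict_space borel ?S)" by (simp add: space_restrict_space)
      moreover have "T \<in> measurable (restrict_space borel ?S) (restrict_space borel ?S)"
        using orth_meas[OF TT(1)] orth_S[OF TT] by (intro measurable_restrict_space3) auto
      ultimately show ?thesis using Ar by (simp add: measurable_sets)
    qed
    have gA: "g -` X \<in> sets borel" if "X \<in> sets (restrict_space borel ?S)" for X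
      using measurable_sets[OF gmU that] sU spU by simp
    have em: "emeasure \<sigma> X = emeasure lborel (B \<inter> g -` X) / emeasure lborel B"
      if X: "X \<in> sets (restrict_space borel ?S)" for X
    proof -
      have "emeasure \<sigma> X = emeasure U (g -` X \<inter> space U)" unfolding \<sigma>_def by (rule emeasure_distr[OF gmU X])
      also have "\<dots> = emeasure lborel (B \<inter> g -` X) / emeasure lborel B"
        unfolding U_def using gA[OF X] Bb by (simp add: emeasure_uniform_measure)
      finally show ?thesis .
    qed
    have lT: "linear T" using TT(1) orthogonal_transformation_linear by blast
    have nT: "norm (T v) = norm v" for v using TT(1) orthogonal_transformation_norm by blast
    have pc: "proj E (T x) = T (proj E x)" for x by (rule proj_comm[OF E TT])
    have T0: "T v = 0 \<longleftrightarrow> v = 0" for v using nT[of v] by (metis norm_eq_zero)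
    have BT: "T x \<in> B \<longleftrightarrow> x \<in> B" for x by (simp add: B_def pc nT T0)
    have gT: "g (T x) = T (g x)" if "x \<in> B" for x
      using that by (simp add: B_def g_def pc nT T0 linear_scale[OF lT])
    have key: "B \<inter> g -` (T -` A \<inter> ?S) = T -` (B \<inter> g -` A)"
    proof (intro set_eqI iffI)
      fix x assume "x \<in> B \<inter> g -` (T -` A \<inter> ?S)"
      then show "x \<in> T -` (B \<inter> g -` A)" using BT gT by auto
    next
      fix x assume "x \<in> T -` (B \<inter> g -` A)"
      then show "x \<in> B \<inter> g -` (T -` A \<inter> ?S)" using BT gT gS by auto
    qed
    have "emeasure \<sigma> (T -` A \<inter> space \<sigma>) = emeasure lborel (B \<inter> g -` (T -` A \<inter> ?S)) / emeasure lborel B"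
      using em[OF A'] sps by simp
    also have "\<dots> = emeasure lborel (B \<inter> g -` A) / emeasure lborel B"
    proof -
      have "B \<inter> g -` A \<in> sets borel" using Bb gA[OF Ar] by auto
      moreover have "bounded (B \<inter> g -` A)" using Bbd bounded_subset by blast
      ultimately have "emeasure lborel (T -` (B \<inter> g -` A)) = emeasure lborel (B \<inter> g -` A)"
        by (rule lborel_orth_inv[OF TT(1)])
      then show ?thesis unfolding key by simp
    qed
    also have "\<dots> = emeasure \<sigma> A" using em[OF Ar] by simp
    finally show "emeasure \<sigma> (T -` A \<inter> space \<sigma>) = emeasure \<sigma> A" .
  qed
  then show ?thesis by blast
qed

lemma lin_iso_inner:
  assumes J: "linear J" "\<And>x. norm (J x) = norm x"
  shows "J x \<bullet> J y = x \<bullet> y"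
proof -
  have "(norm (J (x + y)))\<^sup>2 = (norm (x + y))\<^sup>2" using J(2) by simp
  then have "(J x + J y) \<bullet> (J x + J y) = (x + y) \<bullet> (x + y)"
    using linear_add[OF J(1)] by (simp add: power2_norm_eq_inner)
  moreover have "J x \<bullet> J x = x \<bullet> x" "J y \<bullet> J y = y \<bullet> y" using J(2) by (simp_all add: power2_norm_eq_inner[symmetric])
  ultimately show ?thesis by (simp add: inner_add_left inner_add_right inner_commute)
qed

lemma haar_transfer:
  fixes J :: "'a::euclidean_space \<Rightarrow> 'b::euclidean_space" and E :: "'a set"
  assumes J: "linear J" "\<And>x. norm (J x) = norm x" and E: "subspace E"
    and h': "haar_prop (J ` E) \<sigma>'"
  shows "\<exists>\<sigma>. haar_prop E \<sigma>"
proof -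
  let ?S = "sphere 0 1 \<inter> E" and ?S' = "sphere 0 1 \<inter> J ` E"
  define K where "K = adjoint J"
  have ip: "J x \<bullet> J y = x \<bullet> y" for x y by (rule lin_iso_inner[OF J])
  have lK: "linear K" unfolding K_def by (rule adjoint_linear[OF J(1)])
  have adj: "x \<bullet> K y = J x \<bullet> y" for x y unfolding K_def by (rule adjoint_works[OF J(1)])
  have KJ: "K (J x) = x" for x
  proof -
    have "(K (J x) - x) \<bullet> (K (J x) - x) = 0"
      by (simp add: inner_diff_left inner_diff_right adj ip inner_commute)
    then show ?thesis by simp
  qed
  have S': "?S' = J ` ?S"
  proof (intro set_eqI iffI)
    fix y assume "y \<in> ?S'"
    then obtain x where "x \<in> E" "y = J x" "norm y = 1" by auto
    then show "y \<in> J ` ?S" using J(2) by auto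
  next
    fix y assume "y \<in> J ` ?S"
    then show "y \<in> ?S'" using J(2) by auto
  qed
  have KS: "K y \<in> ?S" if "y \<in> ?S'" for y using that S' KJ by auto
  have Km: "K \<in> measurable borel borel"
    by (intro borel_measurable_continuous_onI linear_continuous_on) (metis lK linear_conv_bounded_linear)
  have sm': "sets \<sigma>' = sets (restrict_space borel ?S')" and p': "prob_space \<sigma>'"
    and inv': "\<And>T A. orthogonal_transformation T \<Longrightarrow> T ` (J ` E) = J ` E \<Longrightarrow> A \<in> sets \<sigma>' \<Longrightarrow>
        emeasure \<sigma>' (T -` A \<inter> space \<sigma>') = emeasure \<sigma>' A"
    using h' unfolding haar_prop_def by auto
  have sp': "space \<sigma>' = ?S'" using haar_space[OF h'] .
  have Kmm: "K \<in> measurable \<sigma>' (restrict_space borel ?S)"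
  proof -
    have "K \<in> measurable (restrict_space borel ?S') (restrict_space borel ?S)"
      using Km KS by (intro measurable_restrict_space3) auto
    then show ?thesis using measurable_cong_sets[OF sm' refl] by blast
  qed
  define \<sigma> where "\<sigma> = distr \<sigma>' (restrict_space borel ?S) K"
  have "haar_prop E \<sigma>"
    unfolding haar_prop_def
  proof (intro conjI allI impI ballI)
    show "sets \<sigma> = sets (restrict_space borel ?S)" by (simp add: \<sigma>_def)
    show "prob_space \<sigma>" unfolding \<sigma>_def by (rule prob_space.prob_space_distr[OF p' Kmm])
    fix T A assume T: "orthogonal_transformation T \<and> T ` E = E" and A: "A \<in> sets \<sigma>"
    have TT: "orthogonal_transformation T" "T ` E = E" using T by auto
    have Ar: "A \<in> sets (restrict_space borel ?S)" using A by (simp add: \<sigma>_def)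
    have sps: "space \<sigma> = ?S" by (simp add: \<sigma>_def space_restrict_space)
    define T' where "T' y = J (T (K y)) + (y - J (K y))" for y
    have lT: "linear T" using TT(1) orthogonal_transformation_linear by blast
    have lT': "linear T'" unfolding T'_def
      by (intro linear_compose_add linear_compose_sub linear_ident
          linear_compose[OF linear_compose[OF lK lT] J(1), unfolded o_def] linear_compose[OF lK J(1), unfolded o_def])
    have nT': "norm (T' y) = norm y" for y
    proof -
      have orth: "J z \<bullet> (y - J (K y)) = 0" for z
      proof -
        have a: "J z \<bullet> y = z \<bullet> K y" using adj[of z y] by simp
        have b: "J z \<bullet> J (K y) = z \<bullet> K y" by (rule ip)
        show ?thesis by (simp only: inner_diff_right a b diff_self)
      qed
      have "(norm (T' y))\<^sup>2 = (norm (J (T (K y))))\<^sup>2 + (norm (y - J (K y)))\<^sup>2"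
        unfolding T'_def by (rule norm_add_Pythagorean) (simp add: orthogonal_def orth)
      also have "\<dots> = (norm (J (K y)))\<^sup>2 + (norm (y - J (K y)))\<^sup>2"
        using J(2) TT(1) by (simp add: orthogonal_transformation_norm)
      also have "\<dots> = (norm (J (K y) + (y - J (K y))))\<^sup>2"
        by (rule norm_add_Pythagorean[symmetric]) (simp add: orthogonal_def orth)
      also have "\<dots> = (norm y)\<^sup>2" by simp
      finally show ?thesis using power2_eq_imp_eq norm_ge_zero by blast
    qed
    have oT': "orthogonal_transformation T'" unfolding orthogonal_transformation using lT' nT' by blast
    have T'J: "T' (J x) = J (T x)" for x by (simp add: T'_def KJ)
    have T'E: "T' ` (J ` E) = J ` E"
    proof -
      have "T' ` (J ` E) = J ` (T ` E)" by (auto simp: T'J image_iff)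
      then show ?thesis using TT(2) by simp
    qed
    have Y: "K -` A \<inter> space \<sigma>' \<in> sets \<sigma>'" using measurable_sets[OF Kmm Ar] .
    have key: "K -` (T -` A \<inter> ?S) \<inter> space \<sigma>' = T' -` (K -` A \<inter> space \<sigma>') \<inter> space \<sigma>'"
    proof (intro set_eqI iffI)
      fix y assume y: "y \<in> K -` (T -` A \<inter> ?S) \<inter> space \<sigma>'"
      then obtain x where x: "x \<in> ?S" "y = J x" using sp' S' by auto
      have "T x \<in> ?S" using orth_S[OF TT x(1)] .
      then have "T' y \<in> ?S'" using S' x T'J by auto
      then show "y \<in> T' -` (K -` A \<inter> space \<sigma>') \<inter> space \<sigma>'" using y x sp' T'J KJ by auto
    next
      fix y assume y: "y \<in> T' -` (K -` A \<inter> space \<sigma>') \<inter> space \<sigma>'"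
      then obtain x where x: "x \<in> ?S" "y = J x" using sp' S' by auto
      then show "y \<in> K -` (T -` A \<inter> ?S) \<inter> space \<sigma>'" using y sp' T'J KJ by auto
    qed
    have A': "T -` A \<inter> ?S \<in> sets (restrict_space borel ?S)"
    proof -
      have "T -` A \<inter> ?S = T -` A \<inter> space (restrict_space borel ?S)" by (simp add: space_restrict_space)
      moreover have "T \<in> measurable (restrict_space borel ?S) (restrict_space borel ?S)"
        using orth_meas[OF TT(1)] orth_S[OF TT] by (intro measurable_restrict_space3) auto
      ultimately show ?thesis using Ar by (simp add: measurable_sets)
    qed
    have "emeasure \<sigma> (T -` A \<inter> space \<sigma>) = emeasure \<sigma>' (K -` (T -` A \<inter> ?S) \<inter> space \<sigma>')"
      unfolding \<sigma>_def using emeasure_distr[OF Kmm A'] sps by (simp add: \<sigma>_def)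
    also have "\<dots> = emeasure \<sigma>' (K -` A \<inter> space \<sigma>')" unfolding key by (rule inv'[OF oT' T'E Y])
    also have "\<dots> = emeasure \<sigma> A" unfolding \<sigma>_def by (rule emeasure_distr[OF Kmm Ar, symmetric])
    finally show "emeasure \<sigma> (T -` A \<inter> space \<sigma>) = emeasure \<sigma> A" .
  qed
  then show ?thesis by blast
qed

lemma haar_exists:
  fixes E :: "(real^'n) set"
  assumes E: "subspace E" and dE: "dim E > 0"
  shows "\<exists>\<mu>. haar_prop E \<mu>"
proof -
  have "CARD('n) \<le> dim (UNIV :: (real^('n bit0)) set)" by simp
  then obtain W :: "(real^('n bit0)) set" where W: "subspace W" "dim W = CARD('n)"
    using choose_subspace_of_subspace[of "CARD('n)" "UNIV :: (real^('n bit0)) set"] by metis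
  have "dim (UNIV :: (real^'n) set) = dim W" using W by simp
  then obtain J where J: "linear J" "J ` UNIV = W" "\<And>x. x \<in> (UNIV :: (real^'n) set) \<Longrightarrow> norm (J x) = norm x"
    using isometry_subspaces[OF subspace_UNIV W(1)] by metis
  have J2: "\<And>x. norm (J x) = norm x" using J(3) by simp
  have "\<not> E \<subseteq> {0}" using dE by (metis dim_eq_0 less_nat_zero_code)
  then obtain e where e: "e \<in> E" "e \<noteq> 0" by blast
  have "J e \<in> J ` E" "J e \<noteq> 0" using e J2[of e] by auto
  moreover have "subspace (J ` E)" using E J(1) by (rule linear_subspace_image[rotated])
  ultimately obtain \<sigma>' where "haar_prop (J ` E) \<sigma>'" using haar_exists_wo[of "J ` E"] by blast
  then show ?thesis using haar_transfer[OF J(1) J2 E] by blast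
qed

lemma haar_sphere_prop:
  fixes E :: "(real^'n) set"
  assumes E: "subspace E" and dE: "dim E > 0"
  shows "haar_prop E (haar_sphere E)"
proof -
  obtain \<mu> where "haar_prop E \<mu>" using haar_exists[OF E dE] by blast
  then have "\<exists>!\<mu>. haar_prop E \<mu>" using haar_unique[OF E] by blast
  then show ?thesis unfolding haar_sphere_eq by (rule theI')
qed

lemma haar_facts:
  fixes E :: "(real^'n) set"
  assumes E: "subspace E" "dim E > 0"
  shows "prob_space (haar_sphere E)" "space (haar_sphere E) = sphere 0 1 \<inter> E"
    "sets (haar_sphere E) = sets (restrict_space borel (sphere 0 1 \<inter> E))"
  using haar_sphere_prop[OF E] haar_space[OF haar_sphere_prop[OF E]] by (auto simp: haar_prop_def)

lemma haar_meas:
  fixes E :: "(real^'n) set"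
  assumes E: "subspace E" "dim E > 0" and h: "continuous_on (sphere 0 1) h"
  shows "h \<in> borel_measurable (haar_sphere E)"
proof -
  have hS: "continuous_on (sphere 0 1 \<inter> E) h" using continuous_on_subset[OF h] by auto
  show ?thesis
    using borel_measurable_continuous_on_restrict[OF hS] measurable_cong_sets[OF haar_facts(3)[OF E] refl] by blast
qed

lemma radon_integrable:
  fixes E :: "(real^'n) set"
  assumes E: "subspace E" "dim E > 0" and h: "continuous_on (sphere 0 1) h"
  shows "integrable (haar_sphere E) (h :: real^'n \<Rightarrow> real)"
proof -
  interpret prob_space "haar_sphere E" using haar_facts[OF E] by simp
  have "compact (h ` sphere 0 1)" by (rule compact_continuous_image[OF h compact_sphere])
  then obtain B where B: "\<forall>y \<in> h ` sphere 0 1. norm y \<le> B" using compact_imp_bounded bounded_iff by metis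
  show ?thesis
  proof (rule integrable_const_bound[where B=B])
    show "AE x in haar_sphere E. norm (h x) \<le> B" using B haar_facts(2)[OF E] by (intro AE_I2) auto
  qed (rule haar_meas[OF E h])
qed

lemma radon_close:
  fixes E :: "(real^'n) set"
  assumes E: "subspace E" "dim E > 0" and f: "continuous_on (sphere 0 1) f" and g: "continuous_on (sphere 0 1) g"
    and fg: "\<And>x. x \<in> sphere 0 1 \<Longrightarrow> \<bar>f x - g x\<bar> \<le> e"
  shows "\<bar>radon f E - radon g E\<bar> \<le> e"
proof -
  interpret prob_space "haar_sphere E" using haar_facts[OF E] by simp
  have i: "integrable (haar_sphere E) f" "integrable (haar_sphere E) g"
    using radon_integrable[OF E f] radon_integrable[OF E g] by auto
  have "radon f E - radon g E = (\<integral>x. f x - g x \<partial>haar_sphere E)" unfolding radon_def using i by simp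
  also have "\<bar>\<dots>\<bar> \<le> (\<integral>x. \<bar>f x - g x\<bar> \<partial>haar_sphere E)" by (rule integral_abs_bound)
  also have "\<dots> \<le> (\<integral>x. e \<partial>haar_sphere E)"
    using i fg haar_facts(2)[OF E] by (intro integral_mono) auto
  also have "\<dots> = e" by (simp add: prob_space)
  finally show ?thesis .
qed

lemma radon_push:
  fixes E0 E :: "(real^'n) set"
  assumes E0: "subspace E0" "dim E0 > 0" and E: "subspace E" "dim E > 0"
    and T: "orthogonal_transformation T" "T ` E0 = E"
    and h: "continuous_on (sphere 0 1) h"
  shows "radon h E = (\<integral>x. h (T x) \<partial>haar_sphere E0)"
proof -
  let ?SZ = "sphere 0 1 \<inter> E0" and ?S = "sphere 0 1 \<inter> E"
  let ?\<mu> = "haar_sphere E0"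
  have h0: "haar_prop E0 ?\<mu>" by (rule haar_sphere_prop[OF E0])
  have sm: "sets ?\<mu> = sets (restrict_space borel ?SZ)" using h0 unfolding haar_prop_def by blast
  have pm: "prob_space ?\<mu>" using h0 unfolding haar_prop_def by blast
  have inv: "\<And>T' A. orthogonal_transformation T' \<Longrightarrow> T' ` E0 = E0 \<Longrightarrow> A \<in> sets ?\<mu> \<Longrightarrow>
        emeasure ?\<mu> (T' -` A \<inter> space ?\<mu>) = emeasure ?\<mu> A"
    using h0 unfolding haar_prop_def by blast
  have sp: "space ?\<mu> = ?SZ" by (rule haar_space[OF h0])
  have TS: "T x \<in> ?S" if "x \<in> ?SZ" for x using that T by (auto simp: orthogonal_transformation_norm)
  have Tm: "T \<in> measurable ?\<mu> (restrict_space borel ?S)"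
  proof -
    have "T \<in> measurable (restrict_space borel ?SZ) (restrict_space borel ?S)"
      using orth_meas[OF T(1)] TS by (intro measurable_restrict_space3) auto
    then show ?thesis using measurable_cong_sets[OF sm refl] by blast
  qed
  define \<nu> where "\<nu> = distr ?\<mu> (restrict_space borel ?S) T"
  have "haar_prop E \<nu>"
    unfolding haar_prop_def
  proof (intro conjI allI impI ballI)
    show "sets \<nu> = sets (restrict_space borel ?S)" by (simp add: \<nu>_def)
    show "prob_space \<nu>" unfolding \<nu>_def by (rule prob_space.prob_space_distr[OF pm Tm])
    fix T1 A assume T1: "orthogonal_transformation T1 \<and> T1 ` E = E" and A: "A \<in> sets \<nu>"
    have TT1: "orthogonal_transformation T1" "T1 ` E = E" using T1 by auto
    have Ar: "A \<in> sets (restrict_space borel ?S)" using A by (simp add: \<nu>_def)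
    have spn: "space \<nu> = ?S" by (simp add: \<nu>_def space_restrict_space)
    define T2 where "T2 = inv T \<circ> T1 \<circ> T"
    have iT: "orthogonal_transformation (inv T)" by (rule orthogonal_transformation_inv[OF T(1)])
    have oT2: "orthogonal_transformation T2" unfolding T2_def
      by (intro orthogonal_transformation_compose iT TT1(1) T(1))
    have bT: "bij T" by (rule orthogonal_transformation_bij[OF T(1)])
    have TiT: "T (inv T y) = y" for y using bT by (simp add: bij_is_surj surj_f_inv_f)
    have iTT: "inv T (T y) = y" for y using bT by (simp add: bij_is_inj inv_f_f)
    have T2E: "T2 ` E0 = E0"
    proof -
      have "T2 ` E0 = inv T ` (T1 ` (T ` E0))" by (simp add: T2_def image_comp)
      also have "\<dots> = inv T ` (T ` E0)" using T(2) TT1(2) by simp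
      also have "\<dots> = E0" using iTT by (simp add: image_comp)
      finally show ?thesis .
    qed
    have A': "T1 -` A \<inter> ?S \<in> sets (restrict_space borel ?S)"
    proof -
      have "T1 -` A \<inter> ?S = T1 -` A \<inter> space (restrict_space borel ?S)" by (simp add: space_restrict_space)
      moreover have "T1 \<in> measurable (restrict_space borel ?S) (restrict_space borel ?S)"
        using orth_meas[OF TT1(1)] orth_S[OF TT1] by (intro measurable_restrict_space3) auto
      ultimately show ?thesis using Ar by (simp add: measurable_sets)
    qed
    have Y: "T -` A \<inter> space ?\<mu> \<in> sets ?\<mu>" by (rule measurable_sets[OF Tm Ar])
    have key: "T2 -` (T -` A \<inter> space ?\<mu>) \<inter> space ?\<mu> = T -` (T1 -` A \<inter> ?S) \<inter> space ?\<mu>"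
    proof -
      have "T (T2 x) = T1 (T x)" for x by (simp add: T2_def TiT)
      moreover have "T2 x \<in> ?SZ" if "x \<in> ?SZ" for x using orth_S[OF oT2 T2E that] .
      ultimately show ?thesis using sp TS by auto
    qed
    have "emeasure \<nu> (T1 -` A \<inter> space \<nu>) = emeasure ?\<mu> (T -` (T1 -` A \<inter> ?S) \<inter> space ?\<mu>)"
      unfolding \<nu>_def using emeasure_distr[OF Tm A'] spn by (simp add: \<nu>_def)
    also have "\<dots> = emeasure ?\<mu> (T -` A \<inter> space ?\<mu>)" unfolding key[symmetric] by (rule inv[OF oT2 T2E Y])
    also have "\<dots> = emeasure \<nu> A" unfolding \<nu>_def by (rule emeasure_distr[OF Tm Ar, symmetric])
    finally show "emeasure \<nu> (T1 -` A \<inter> space \<nu>) = emeasure \<nu> A" .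
  qed
  then have eq: "\<nu> = haar_sphere E" using haar_unique[OF E(1) _ haar_sphere_prop[OF E]] by blast
  have hm: "h \<in> borel_measurable (restrict_space borel ?S)"
    using borel_measurable_continuous_on_restrict[OF continuous_on_subset[OF h]] by auto
  have "integral\<^sup>L \<nu> h = (\<integral>x. h (T x) \<partial>?\<mu>)" unfolding \<nu>_def by (rule integral_distr[OF Tm hm])
  then show ?thesis unfolding radon_def eq .
qed

definition F0 :: "nat \<Rightarrow> (real^'n) set" where "F0 d = (SOME F. subspace F \<and> dim F = d)"
definition e0 :: "nat \<Rightarrow> real^'n" where "e0 d = (SOME e. e \<in> F0 d \<and> norm e = 1)"

lemma F0: "d \<le> CARD('n) \<Longrightarrow> subspace (F0 d :: (real^'n) set) \<and> dim (F0 d :: (real^'n) set) = d"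
proof -
  assume d: "d \<le> CARD('n)"
  then have "d \<le> dim (UNIV :: (real^'n) set)" by simp
  then obtain F :: "(real^'n) set" where "subspace F" "dim F = d"
    using choose_subspace_of_subspace[of d "UNIV :: (real^'n) set"] by metis
  then have "\<exists>F :: (real^'n) set. subspace F \<and> dim F = d" by blast
  then show ?thesis unfolding F0_def by (rule someI_ex)
qed

lemma e0: "0 < d \<Longrightarrow> d \<le> CARD('n) \<Longrightarrow> (e0 d :: real^'n) \<in> F0 d \<and> norm (e0 d :: real^'n) = 1"
proof -
  assume d: "0 < d" "d \<le> CARD('n)"
  have F: "subspace (F0 d :: (real^'n) set)" "dim (F0 d :: (real^'n) set) = d" using F0[OF d(2)] by auto
  have "\<not> (F0 d :: (real^'n) set) \<subseteq> {0}" using F d(1) by (metis dim_eq_0 less_nat_zero_code)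
  then obtain v :: "real^'n" where v: "v \<in> F0 d" "v \<noteq> 0" by blast
  have "v /\<^sub>R norm v \<in> F0 d \<and> norm (v /\<^sub>R norm v) = 1" using v F(1) by (simp add: subspace_scale)
  then have "\<exists>e :: real^'n. e \<in> F0 d \<and> norm e = 1" by blast
  then show ?thesis unfolding e0_def by (rule someI_ex)
qed

lemma radon_ridge:
  fixes E :: "(real^'n) set"
  assumes E: "subspace E" "dim E = d" "0 < d" and \<phi>: "continuous_on UNIV \<phi>"
  shows "radon (\<lambda>x. \<phi> (a \<bullet> x)) E = (\<integral>x. \<phi> (norm (proj E a) * (e0 d \<bullet> x)) \<partial>haar_sphere (F0 d :: (real^'n) set))"
proof -
  have dn: "d \<le> CARD('n)" using E(2) dim_subset_UNIV_cart[of E] by simp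
  have F: "subspace (F0 d :: (real^'n) set)" "dim (F0 d :: (real^'n) set) = d" using F0[OF dn] by auto
  have e: "(e0 d :: real^'n) \<in> F0 d" "norm (e0 d :: real^'n) = 1" using e0[OF E(3) dn] by auto
  have E': "subspace E" "dim E > 0" using E by auto
  have F': "subspace (F0 d :: (real^'n) set)" "dim (F0 d :: (real^'n) set) > 0" using F E by auto
  have hc: "continuous_on (sphere 0 1) (\<lambda>x. \<phi> (a \<bullet> x))"
    by (intro continuous_on_compose2[OF \<phi>] continuous_intros) auto
  define b where "b = proj E a"
  show ?thesis
  proof (cases "b = 0")
    case True
    have "radon (\<lambda>x. \<phi> (a \<bullet> x)) E = (\<integral>x. \<phi> 0 \<partial>haar_sphere E)" unfolding radon_def
    proof (rule Bochner_Integration.integral_cong[OF refl])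
      fix x assume "x \<in> space (haar_sphere E)"
      then have "x \<in> E" using haar_facts(2)[OF E'] by auto
      then have "a \<bullet> x = b \<bullet> x" unfolding b_def by (rule proj_inner[OF E(1)])
      then show "\<phi> (a \<bullet> x) = \<phi> 0" using True by simp
    qed
    also have "\<dots> = \<phi> 0" using prob_space.prob_space[OF haar_facts(1)[OF E']] by simp
    also have "\<dots> = (\<integral>x. \<phi> (norm (proj E a) * (e0 d \<bullet> x)) \<partial>haar_sphere (F0 d :: (real^'n) set))"
      using True prob_space.prob_space[OF haar_facts(1)[OF F']] by (simp add: b_def)
    finally show ?thesis .
  next
    case False
    define u where "u = b /\<^sub>R norm b"
    have u: "u \<in> E" "norm u = 1" using False proj_in[OF E(1)] E(1) by (auto simp: u_def b_def subspace_scale)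
    obtain T :: "real^'n \<Rightarrow> real^'n" where T: "orthogonal_transformation T" "T ` F0 d = E" "T (e0 d) = u"
    proof -
      have dd: "dim (F0 d :: (real^'n) set) = dim E" using F(2) E(2) by simp
      show ?thesis using orth_map_subspaces_pt[OF F(1) E(1) dd e u] that by blast
    qed
    have "radon (\<lambda>x. \<phi> (a \<bullet> x)) E = (\<integral>x. \<phi> (a \<bullet> T x) \<partial>haar_sphere (F0 d :: (real^'n) set))"
      by (rule radon_push[OF F' E' T(1,2) hc])
    also have "\<dots> = (\<integral>x. \<phi> (norm (proj E a) * (e0 d \<bullet> x)) \<partial>haar_sphere (F0 d :: (real^'n) set))"
    proof (rule Bochner_Integration.integral_cong[OF refl])
      fix x :: "real^'n" assume "x \<in> space (haar_sphere (F0 d))"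
      then have x: "x \<in> F0 d" using haar_facts(2)[OF F'] by auto
      then have "T x \<in> E" using T(2) by blast
      then have "a \<bullet> T x = b \<bullet> T x" unfolding b_def by (rule proj_inner[OF E(1)])
      also have "\<dots> = norm b * (u \<bullet> T x)" using False by (simp add: u_def inner_scaleR_left)
      also have "u \<bullet> T x = e0 d \<bullet> x"
      proof -
        have "T (e0 d) \<bullet> T x = e0 d \<bullet> x" using T(1) unfolding orthogonal_transformation_def by blast
        then show ?thesis using T(3) by simp
      qed
      finally show "\<phi> (a \<bullet> T x) = \<phi> (norm (proj E a) * (e0 d \<bullet> x))" by (simp add: b_def)
    qed
    finally show ?thesis .
  qed
qed

lemma Cpos:
  assumes d: "0 < d" "d \<le> CARD('n)"
  shows "0 < (\<integral>x. (e0 d \<bullet> x) ^ (2 * j) \<partial>haar_sphere (F0 d :: (real^'n) set))"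
proof -
  let ?F = "F0 d :: (real^'n) set"
  let ?\<mu> = "haar_sphere ?F"
  let ?C = "(\<integral>x. (e0 d \<bullet> x) ^ (2 * j) \<partial>?\<mu>)"
  have F: "subspace ?F" "dim ?F = d" using F0[OF d(2)] by auto
  have F': "subspace ?F" "dim ?F > 0" using F d by auto
  interpret prob_space ?\<mu> using haar_facts(1)[OF F'] .
  have pc: "continuous_on UNIV (\<lambda>t::real. t ^ (2 * j))" by (intro continuous_intros)
  have C0: "?C \<ge> 0" by (rule Bochner_Integration.integral_nonneg) (simp add: zero_le_even_power)
  show ?thesis
  proof (rule ccontr)
    assume "\<not> 0 < ?C"
    then have C: "?C = 0" using C0 by simp
    have z: "AE x in ?\<mu>. b \<bullet> x = 0" if b: "b \<in> ?F" for b
    proof -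
      have hc: "continuous_on (sphere 0 1) (\<lambda>x. (b \<bullet> x) ^ (2 * j))" by (intro continuous_intros)
      have "radon (\<lambda>x. (b \<bullet> x) ^ (2 * j)) ?F = (\<integral>x. (norm (proj ?F b) * (e0 d \<bullet> x)) ^ (2 * j) \<partial>?\<mu>)"
        using radon_ridge[OF F(1,2) d(1) pc, of b] by simp
      also have "\<dots> = (\<integral>x. norm b ^ (2 * j) * (e0 d \<bullet> x) ^ (2 * j) \<partial>?\<mu>)"
        using proj_id[OF F(1) b] by (simp add: power_mult_distrib)
      also have "\<dots> = 0" using C by simp
      finally have "(\<integral>x. (b \<bullet> x) ^ (2 * j) \<partial>?\<mu>) = 0" unfolding radon_def .
      moreover have "integrable ?\<mu> (\<lambda>x. (b \<bullet> x) ^ (2 * j))" by (rule radon_integrable[OF F' hc])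
      ultimately have "AE x in ?\<mu>. (b \<bullet> x) ^ (2 * j) = 0"
        using integral_nonneg_eq_0_iff_AE[of ?\<mu> "\<lambda>x. (b \<bullet> x) ^ (2 * j)"] by (simp add: zero_le_even_power)
      then show ?thesis by (rule AE_mp) (auto intro!: AE_I2 simp: power_eq_0_iff)
    qed
    obtain B where B: "B \<subseteq> ?F" "independent B" "span B = ?F"
      using orthonormal_basis_subspace[OF F(1)] by metis
    have fB: "finite B" using B(2) by (rule independent_imp_finite)
    have "AE x in ?\<mu>. \<forall>b\<in>B. b \<bullet> x = 0" using fB B(1) z by (intro AE_finite_allI) auto
    moreover have "AE x in ?\<mu>. x \<in> sphere 0 1 \<inter> ?F" using haar_facts(2)[OF F'] by (intro AE_I2) auto
    ultimately have "AE x in ?\<mu>. False"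
    proof (eventually_elim)
      case (elim x)
      then have "x \<in> span B" using B(3) by auto
      then have "orthogonal x x"
      proof (rule orthogonal_to_span)
        fix y assume "y \<in> B"
        then have "y \<bullet> x = 0" using elim(1) by blast
        then show "orthogonal x y" by (simp add: orthogonal_def inner_commute)
      qed
      then show False using elim(2) by (simp add: orthogonal_def)
    qed
    then show False by simp
  qed
qed

definition expsum :: "(real \<times> 'a::real_inner) list \<Rightarrow> 'a \<Rightarrow> real" where
  "expsum L x = (\<Sum>p\<leftarrow>L. fst p * exp (snd p \<bullet> x))"

definition expmul :: "(real \<times> 'a) list \<Rightarrow> (real \<times> 'a) list \<Rightarrow> (real \<times> 'a::real_inner) list" where
  "expmul L1 L2 = concat (map (\<lambda>p. map (\<lambda>q. (fst p * fst q, snd p + snd q)) L2) L1)"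

lemma expsum_Nil[simp]: "expsum [] x = 0" by (simp add: expsum_def)
lemma expsum_Cons[simp]: "expsum (p # L) x = fst p * exp (snd p \<bullet> x) + expsum L x" by (simp add: expsum_def)
lemma expsum_append: "expsum (L1 @ L2) x = expsum L1 x + expsum L2 x" by (simp add: expsum_def)

lemma expsum_map: "expsum (map (\<lambda>q. (c * fst q, a + snd q)) L) x = c * exp (a \<bullet> x) * expsum L x"
  by (induction L) (auto simp: algebra_simps inner_add_left exp_add)

lemma expsum_mul: "expsum (expmul L1 L2) x = expsum L1 x * expsum L2 x"
proof (induction L1)
  case Nil then show ?case by (simp add: expmul_def)
next
  case (Cons p L1)
  have "expmul (p # L1) L2 = map (\<lambda>q. (fst p * fst q, snd p + snd q)) L2 @ expmul L1 L2"
    by (simp add: expmul_def)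
  moreover have "expsum (map (\<lambda>q. (fst p * fst q, snd p + snd q)) L2) x = fst p * exp (snd p \<bullet> x) * expsum L2 x"
    by (rule expsum_map)
  ultimately show ?case using Cons by (simp add: expsum_append distrib_right)
qed

lemma expsum_cont: "continuous_on S (expsum L)"
  unfolding expsum_def by (induction L) (auto intro!: continuous_intros)

lemma SW_exp:
  fixes f :: "'a::euclidean_space \<Rightarrow> real"
  assumes f: "continuous_on (sphere 0 1) f" and e: "0 < e"
  shows "\<exists>L. \<forall>x\<in>sphere 0 1. \<bar>f x - expsum L x\<bar> < e"
proof -
  have "\<exists>g. (\<exists>L. g = expsum L) \<and> (\<forall>x\<in>sphere 0 1. \<bar>f x - g x\<bar> < e)"
  proof (rule Stone_Weierstrass_HOL[where P="\<lambda>g. \<exists>L. g = expsum L"])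
    show "compact (sphere (0::'a) 1)" by simp
    show "\<exists>L. (\<lambda>x. c) = expsum L" for c by (intro exI[of _ "[(c, 0)]"]) (auto simp: fun_eq_iff)
    show "continuous_on (sphere 0 1) g" if "\<exists>L. g = expsum L" for g using that expsum_cont by blast
    show "\<exists>L. (\<lambda>x. g x + h x) = expsum L" if gh: "(\<exists>L. g = expsum L) \<and> (\<exists>L. h = expsum L)" for g h
    proof -
      obtain L1 L2 where "g = expsum L1" "h = expsum L2" using gh by blast
      then have "(\<lambda>x. g x + h x) = expsum (L1 @ L2)" by (simp add: fun_eq_iff expsum_append)
      then show ?thesis by blast
    qed
    show "\<exists>L. (\<lambda>x. g x * h x) = expsum L" if gh: "(\<exists>L. g = expsum L) \<and> (\<exists>L. h = expsum L)" for g h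
    proof -
      obtain L1 L2 where "g = expsum L1" "h = expsum L2" using gh by blast
      then have "(\<lambda>x. g x * h x) = expsum (expmul L1 L2)" by (simp add: fun_eq_iff expsum_mul)
      then show ?thesis by blast
    qed
    show "\<exists>g. (\<exists>L. g = expsum L) \<and> g x \<noteq> g y" if "x \<in> sphere 0 1 \<and> y \<in> sphere 0 1 \<and> x \<noteq> y" for x y
    proof -
      have "(x - y) \<bullet> x - (x - y) \<bullet> y = (x - y) \<bullet> (x - y)" by (simp add: inner_diff_right)
      moreover have "(x - y) \<bullet> (x - y) > 0" using that by simp
      ultimately have "(x - y) \<bullet> x \<noteq> (x - y) \<bullet> y" by linarith
      then have "expsum [(1, x - y)] x \<noteq> expsum [(1, x - y)] y" by simp
      then show ?thesis by blast
    qed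
    show "continuous_on (sphere 0 1) f" by (rule f)
    show "0 < e" by (rule e)
  qed
  then show ?thesis by blast
qed

lemma exp_int_cont:
  fixes g :: "'a \<Rightarrow> real"
  assumes M: "prob_space M" and g: "g \<in> borel_measurable M" and gb: "\<And>x. x \<in> space M \<Longrightarrow> \<bar>g x\<bar> \<le> 1"
  shows "continuous_on UNIV (\<lambda>r. \<integral>x. exp (r * g x) \<partial>M)"
proof (rule continuous_at_imp_continuous_on, intro ballI continuous_at_sequentiallyI)
  interpret prob_space M by fact
  fix r :: real and s :: "nat \<Rightarrow> real" assume s: "s \<longlonglongrightarrow> r"
  obtain B where B: "\<forall>n. norm (s n) \<le> B" using BseqE[OF convergent_imp_Bseq[OF convergentI[OF s]]] by blast
  show "(\<lambda>n. \<integral>x. exp (s n * g x) \<partial>M) \<longlonglongrightarrow> (\<integral>x. exp (r * g x) \<partial>M)"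
  proof (rule integral_dominated_convergence[where w="\<lambda>_. exp B"])
    show "(\<lambda>x. exp (r * g x)) \<in> borel_measurable M" using g by measurable
    show "(\<lambda>x. exp (s n * g x)) \<in> borel_measurable M" for n using g by measurable
    show "integrable M (\<lambda>_. exp B)" by simp
    show "AE x in M. (\<lambda>n. exp (s n * g x)) \<longlonglongrightarrow> exp (r * g x)"
      by (intro AE_I2 tendsto_intros s)
    show "AE x in M. norm (exp (s n * g x)) \<le> exp B" for n
    proof (intro AE_I2)
      fix x assume x: "x \<in> space M"
      have "s n * g x \<le> \<bar>s n\<bar> * \<bar>g x\<bar>" by (simp add: abs_mult[symmetric])
      also have "\<dots> \<le> B * 1" using B gb[OF x] by (intro mult_mono) auto
      finally show "norm (exp (s n * g x)) \<le> exp B" by simp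
    qed
  qed
qed

lemma radon_sum:
  fixes E :: "(real^'n) set"
  assumes E: "subspace E" "dim E > 0" and g: "\<And>i. i \<in> I \<Longrightarrow> continuous_on (sphere 0 1) (g i)"
  shows "radon (\<lambda>x. \<Sum>i\<in>I. c i * g i x) E = (\<Sum>i\<in>I. c i * radon (g i) E)"
proof -
  have "radon (\<lambda>x. \<Sum>i\<in>I. c i * g i x) E = (\<Sum>i\<in>I. integral\<^sup>L (haar_sphere E) (\<lambda>x. c i * g i x))"
    unfolding radon_def
    using Bochner_Integration.integral_sum[where M="haar_sphere E" and I=I and f="\<lambda>i x. c i * g i x"] radon_integrable[OF E g] by simp
  also have "\<dots> = (\<Sum>i\<in>I. c i * radon (g i) E)" unfolding radon_def by simp
  finally show ?thesis .
qed

lemma main_approx: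
  fixes k :: nat and f :: "real^'n \<Rightarrow> real"
  assumes k: "1 \<le> k" "k \<le> CARD('n) - 1" and f: "continuous_on (sphere 0 1) f" and e: "0 < e"
  shows "\<exists>h. continuous_on (sphere 0 1) h \<and>
    (\<forall>E \<in> (grassmannian (CARD('n) - k) :: (real^'n) set set). \<bar>radon f (orthogonal_comp E) - radon h E\<bar> \<le> e)"
proof -
  define m where "m = CARD('n) - k"
  have m: "1 \<le> m" "m \<le> CARD('n)" "k \<le> CARD('n)" "0 < k" "0 < m" using k by (auto simp: m_def)
  have Gf: "subspace E \<and> dim E = m \<and> subspace (orthogonal_comp E) \<and> dim (orthogonal_comp E) = k"
    if "E \<in> grassmannian m" for E :: "(real^'n) set"
  proof -
    from that have E: "subspace E" "dim E = m" by (auto simp: grassmannian_def)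
    have dd: "dim (orthogonal_comp E) + dim E = CARD('n)" using dim_orth_comp[OF E(1)] by simp
    have "dim (orthogonal_comp E) = k" using dd E(2) k unfolding m_def by arith
    then show ?thesis using E subspace_orthogonal_comp by blast
  qed
  have e3: "0 < e / 3" using e by simp
  obtain L where L: "\<forall>x\<in>sphere 0 1. \<bar>f x - expsum L x\<bar> < e / 3" using SW_exp[OF f e3] by blast
  define N where "N = length L"
  define c where "c i = fst (L ! i)" for i
  define a where "a i = snd (L ! i)" for i
  have expsum_eq: "expsum L = (\<lambda>x. \<Sum>i<N. c i * exp (a i \<bullet> x))"
    unfolding expsum_def N_def c_def a_def
    by (simp add: fun_eq_iff sum_list_sum_nth atLeast0LessThan)
  define \<Psi> where "\<Psi> r = (\<integral>x. exp (r * (e0 k \<bullet> x)) \<partial>haar_sphere (F0 k :: (real^'n) set))" for r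
  define C where "C j = (\<integral>x. (e0 m \<bullet> x) ^ (2 * j) \<partial>haar_sphere (F0 m :: (real^'n) set))" for j
  have Cp: "C j > 0" for j unfolding C_def by (rule Cpos) (use m in auto)
  have Fk: "subspace (F0 k :: (real^'n) set)" "dim (F0 k :: (real^'n) set) = k" using F0[OF m(3)] by auto
  have Fk': "subspace (F0 k :: (real^'n) set)" "dim (F0 k :: (real^'n) set) > 0" using Fk m by auto
  have ek: "(e0 k :: real^'n) \<in> F0 k" "norm (e0 k :: real^'n) = 1" using e0[OF m(4) m(3)] by auto
  have \<Psi>c: "continuous_on UNIV \<Psi>"
    unfolding \<Psi>_def
  proof (rule exp_int_cont)
    show "prob_space (haar_sphere (F0 k :: (real^'n) set))" by (rule haar_facts(1)[OF Fk'])
    show "(\<lambda>x. e0 k \<bullet> x) \<in> borel_measurable (haar_sphere (F0 k :: (real^'n) set))"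
      by (rule haar_meas[OF Fk']) (intro continuous_intros)
    fix x :: "real^'n" assume "x \<in> space (haar_sphere (F0 k :: (real^'n) set))"
    then have "norm x = 1" using haar_facts(2)[OF Fk'] by auto
    then show "\<bar>e0 k \<bullet> x\<bar> \<le> 1" using Cauchy_Schwarz_ineq2[of "e0 k" x] ek by simp
  qed
  have rexp: "radon (\<lambda>x. exp (b \<bullet> x)) F = \<Psi> (norm (proj F b))" if "subspace F" "dim F = k" for F :: "(real^'n) set" and b
  proof -
    have "continuous_on UNIV (exp :: real \<Rightarrow> real)" by (intro continuous_intros)
    from radon_ridge[OF that m(4) this, of b] show ?thesis unfolding \<Psi>_def by simp
  qed
  have rpow: "radon (\<lambda>x. (b \<bullet> x) ^ (2 * j)) E = C j * ((norm (proj E b))\<^sup>2) ^ j"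
    if "subspace E" "dim E = m" for E :: "(real^'n) set" and b j
  proof -
    have "continuous_on UNIV (\<lambda>t::real. t ^ (2 * j))" by (intro continuous_intros)
    from radon_ridge[OF that m(5) this, of b]
    have "radon (\<lambda>x. (b \<bullet> x) ^ (2 * j)) E = (\<integral>x. (norm (proj E b) * (e0 m \<bullet> x)) ^ (2 * j) \<partial>haar_sphere (F0 m :: (real^'n) set))"
      by simp
    also have "\<dots> = (\<integral>x. norm (proj E b) ^ (2 * j) * (e0 m \<bullet> x) ^ (2 * j) \<partial>haar_sphere (F0 m :: (real^'n) set))"
      by (simp add: power_mult_distrib)
    also have "\<dots> = norm (proj E b) ^ (2 * j) * C j" unfolding C_def by simp
    also have "norm (proj E b) ^ (2 * j) = ((norm (proj E b))\<^sup>2) ^ j" by (rule power_mult)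
    finally show ?thesis by (simp only: mult.commute)
  qed
  define W where "W = (\<Sum>i<N. \<bar>c i\<bar>)"
  have W0: "W \<ge> 0" unfolding W_def by (simp add: sum_nonneg)
  define \<eta> where "\<eta> = e / (3 * (1 + W))"
  have \<eta>: "\<eta> > 0" using e W0 by (simp add: \<eta>_def)
  have "\<forall>v::real^'n. \<exists>BM. \<forall>q\<in>{0..(norm v)\<^sup>2}. \<bar>\<Psi> (sqrt ((norm v)\<^sup>2 - q)) - (\<Sum>j\<le>snd BM. fst BM j * q ^ j)\<bar> < \<eta>"
  proof
    fix v :: "real^'n"
    have "continuous_on {0..(norm v)\<^sup>2} (\<lambda>q. \<Psi> (sqrt ((norm v)\<^sup>2 - q)))"
      by (intro continuous_on_compose2[OF \<Psi>c] continuous_intros) auto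
    then obtain g where g: "real_polynomial_function g"
        "\<And>q. q \<in> {0..(norm v)\<^sup>2} \<Longrightarrow> \<bar>\<Psi> (sqrt ((norm v)\<^sup>2 - q)) - g q\<bar> < \<eta>"
      using Stone_Weierstrass_real_polynomial_function[OF compact_Icc _ \<eta>] by metis
    then obtain \<beta> M where "g = (\<lambda>q. \<Sum>j\<le>M. \<beta> j * q ^ j)" using real_polynomial_function_iff_sum by metis
    then show "\<exists>BM. \<forall>q\<in>{0..(norm v)\<^sup>2}. \<bar>\<Psi> (sqrt ((norm v)\<^sup>2 - q)) - (\<Sum>j\<le>snd BM. fst BM j * q ^ j)\<bar> < \<eta>"
      using g by (intro exI[of _ "(\<beta>, M)"]) auto
  qed
  from choice[OF this] obtain BM where BM0: "\<forall>v::real^'n. \<forall>q\<in>{0..(norm v)\<^sup>2}.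
      \<bar>\<Psi> (sqrt ((norm v)\<^sup>2 - q)) - (\<Sum>j\<le>snd (BM v). fst (BM v) j * q ^ j)\<bar> < \<eta>"
    by blast
  have BM: "\<And>v q. q \<in> {0..(norm v)\<^sup>2} \<Longrightarrow>
      \<bar>\<Psi> (sqrt ((norm v)\<^sup>2 - q)) - (\<Sum>j\<le>snd (BM v). fst (BM v) j * q ^ j)\<bar> < \<eta>"
    using BM0 by blast
  define h where "h x = (\<Sum>i<N. c i * (\<Sum>j\<le>snd (BM (a i)). (fst (BM (a i)) j / C j) * (a i \<bullet> x) ^ (2 * j)))" for x
  have hc: "continuous_on (sphere 0 1) h" unfolding h_def by (intro continuous_intros)
  show ?thesis
  proof (intro exI conjI ballI)
    show "continuous_on (sphere 0 1) h" by (rule hc)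
    fix E :: "(real^'n) set" assume E: "E \<in> grassmannian (CARD('n) - k)"
    then have EG: "E \<in> grassmannian m" by (simp add: m_def)
    let ?F = "orthogonal_comp E"
    have EF: "subspace E" "dim E = m" "subspace ?F" "dim ?F = k" using Gf[OF EG] by auto
    have E': "subspace E" "dim E > 0" and F': "subspace ?F" "dim ?F > 0" using EF m by auto
    have A: "\<bar>radon f ?F - radon (expsum L) ?F\<bar> \<le> e / 3"
      by (rule radon_close[OF F' f expsum_cont]) (use L in \<open>auto simp: less_imp_le\<close>)
    have B: "radon (expsum L) ?F = (\<Sum>i<N. c i * \<Psi> (norm (proj ?F (a i))))"
    proof -
      have "radon (expsum L) ?F = radon (\<lambda>x. \<Sum>i<N. c i * exp (a i \<bullet> x)) ?F" by (simp only: expsum_eq)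
      also have "\<dots> = (\<Sum>i<N. c i * radon (\<lambda>x. exp (a i \<bullet> x)) ?F)"
        by (rule radon_sum[OF F']) (intro continuous_intros)
      also have "\<dots> = (\<Sum>i<N. c i * \<Psi> (norm (proj ?F (a i))))" using rexp[OF EF(3,4)] by simp
      finally show ?thesis .
    qed
    have pF: "norm (proj ?F v) = sqrt ((norm v)\<^sup>2 - (norm (proj E v))\<^sup>2)" for v
    proof -
      have "proj ?F v = v - proj E v" by (rule proj_comp[OF EF(1)])
      moreover have "(norm v)\<^sup>2 = (norm (proj E v))\<^sup>2 + (norm (v - proj E v))\<^sup>2" by (rule proj_pyth[OF EF(1)])
      ultimately show ?thesis by simp
    qed
    have qin: "(norm (proj E v))\<^sup>2 \<in> {0..(norm v)\<^sup>2}" for v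
      using proj_pyth[OF EF(1), of v] by (simp add: zero_le_power2)
    have Cc: "radon h E = (\<Sum>i<N. c i * (\<Sum>j\<le>snd (BM (a i)). fst (BM (a i)) j * ((norm (proj E (a i)))\<^sup>2) ^ j))"
    proof -
      have "radon h E = (\<Sum>i<N. c i * radon (\<lambda>x. \<Sum>j\<le>snd (BM (a i)). (fst (BM (a i)) j / C j) * (a i \<bullet> x) ^ (2 * j)) E)"
        unfolding h_def by (rule radon_sum[OF E']) (intro continuous_intros)
      also have "\<dots> = (\<Sum>i<N. c i * (\<Sum>j\<le>snd (BM (a i)). (fst (BM (a i)) j / C j) * radon (\<lambda>x. (a i \<bullet> x) ^ (2 * j)) E))"
      proof (rule sum.cong[OF refl])
        fix i assume "i \<in> {..<N}"
        have "radon (\<lambda>x. \<Sum>j\<le>snd (BM (a i)). (fst (BM (a i)) j / C j) * (a i \<bullet> x) ^ (2 * j)) E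
            = (\<Sum>j\<le>snd (BM (a i)). (fst (BM (a i)) j / C j) * radon (\<lambda>x. (a i \<bullet> x) ^ (2 * j)) E)"
          by (rule radon_sum[OF E']) (intro continuous_intros)
        then show "c i * radon (\<lambda>x. \<Sum>j\<le>snd (BM (a i)). (fst (BM (a i)) j / C j) * (a i \<bullet> x) ^ (2 * j)) E
            = c i * (\<Sum>j\<le>snd (BM (a i)). (fst (BM (a i)) j / C j) * radon (\<lambda>x. (a i \<bullet> x) ^ (2 * j)) E)" by simp
      qed
      also have "\<dots> = (\<Sum>i<N. c i * (\<Sum>j\<le>snd (BM (a i)). fst (BM (a i)) j * ((norm (proj E (a i)))\<^sup>2) ^ j))"
      proof -
        have "(fst (BM (a i)) j / C j) * radon (\<lambda>x. (a i \<bullet> x) ^ (2 * j)) E = fst (BM (a i)) j * ((norm (proj E (a i)))\<^sup>2) ^ j" for i j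
          using rpow[OF EF(1,2), of "a i" j] Cp[of j] by simp
        then show ?thesis by simp
      qed
      finally show ?thesis .
    qed
    have D: "\<bar>radon (expsum L) ?F - radon h E\<bar> \<le> e / 3"
    proof -
      define q where "q i = (norm (proj E (a i)))\<^sup>2" for i
      have "radon (expsum L) ?F - radon h E
          = (\<Sum>i<N. c i * (\<Psi> (sqrt ((norm (a i))\<^sup>2 - q i)) - (\<Sum>j\<le>snd (BM (a i)). fst (BM (a i)) j * q i ^ j)))"
        unfolding B Cc q_def pF by (simp add: sum_subtractf right_diff_distrib)
      also have "\<bar>\<dots>\<bar> \<le> (\<Sum>i<N. \<bar>c i * (\<Psi> (sqrt ((norm (a i))\<^sup>2 - q i)) - (\<Sum>j\<le>snd (BM (a i)). fst (BM (a i)) j * q i ^ j))\<bar>)"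
        by (rule sum_abs)
      also have "\<dots> \<le> (\<Sum>i<N. \<bar>c i\<bar> * \<eta>)"
      proof (rule sum_mono)
        fix i assume "i \<in> {..<N}"
        have "\<bar>\<Psi> (sqrt ((norm (a i))\<^sup>2 - q i)) - (\<Sum>j\<le>snd (BM (a i)). fst (BM (a i)) j * q i ^ j)\<bar> < \<eta>"
          using BM[OF qin[of "a i"]] unfolding q_def .
        then show "\<bar>c i * (\<Psi> (sqrt ((norm (a i))\<^sup>2 - q i)) - (\<Sum>j\<le>snd (BM (a i)). fst (BM (a i)) j * q i ^ j))\<bar> \<le> \<bar>c i\<bar> * \<eta>"
          by (simp add: abs_mult mult_left_mono)
      qed
      also have "\<dots> = W * \<eta>" unfolding W_def by (simp add: sum_distrib_right)
      also have "\<dots> \<le> e / 3"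
      proof -
        have "W * \<eta> = e / 3 * (W / (1 + W))" using W0 by (simp add: \<eta>_def field_simps)
        also have "\<dots> \<le> e / 3 * 1" using W0 e by (intro mult_left_mono) auto
        finally show ?thesis by simp
      qed
      finally show ?thesis .
    qed
    show "\<bar>radon f ?F - radon h E\<bar> \<le> e" using A D by linarith
  qed
qed

lemma closure_mono_lemma:
  assumes "\<And>g. g \<in> S1 \<Longrightarrow> g \<in> sup_closure G S2"
  shows "sup_closure G S1 \<subseteq> sup_closure G S2"
proof
  fix g assume g: "g \<in> sup_closure G S1"
  show "g \<in> sup_closure G S2" unfolding sup_closure_def
  proof (intro CollectI allI impI)
    fix e :: real assume e: "e > 0"
    have e2: "e / 2 > 0" using e by simp
    have gg: "\<forall>e>0. \<exists>h\<in>S1. \<forall>E\<in>G. \<bar>g E - h E\<bar> \<le> e" using g by (simp add: sup_closure_def)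
    obtain h1 where h1: "h1 \<in> S1" "\<forall>E\<in>G. \<bar>g E - h1 E\<bar> \<le> e / 2"
      using gg e2 by blast
    have hh: "\<forall>e>0. \<exists>h\<in>S2. \<forall>E\<in>G. \<bar>h1 E - h E\<bar> \<le> e" using assms[OF h1(1)] by (simp add: sup_closure_def)
    obtain h2 where h2: "h2 \<in> S2" "\<forall>E\<in>G. \<bar>h1 E - h2 E\<bar> \<le> e / 2"
      using hh e2 by blast
    have "\<forall>E\<in>G. \<bar>g E - h2 E\<bar> \<le> e"
    proof
      fix E assume "E \<in> G"
      then have a: "\<bar>g E - h1 E\<bar> \<le> e / 2" "\<bar>h1 E - h2 E\<bar> \<le> e / 2" using h1(2) h2(2) by auto
      then show "\<bar>g E - h2 E\<bar> \<le> e" unfolding abs_le_iff by linarith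
    qed
    then show "\<exists>h\<in>S2. \<forall>E\<in>G. \<bar>g E - h E\<bar> \<le> e" using h2(1) by blast
  qed
qed

theorem mainTheorem11:
  fixes k :: nat
  assumes "1 \<le> k" and "k \<le> CARD('n::finite) - 1"
  shows "sup_closure (grassmannian (CARD('n) - k) :: (real^'n) set set)
            ((\<lambda>f E. radon f E) ` Csphere)
       = sup_closure (grassmannian (CARD('n) - k))
            ((\<lambda>f E. radon f (orthogonal_comp E)) ` Csphere)"
proof
  let ?G = "grassmannian (CARD('n) - k) :: (real^'n) set set"
  show "sup_closure ?G ((\<lambda>f E. radon f (orthogonal_comp E)) ` Csphere) \<subseteq> sup_closure ?G ((\<lambda>f E. radon f E) ` Csphere)"
  proof (rule closure_mono_lemma)
    fix g :: "(real^'n) set \<Rightarrow> real" assume "g \<in> (\<lambda>f E. radon f (orthogonal_comp E)) ` Csphere"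
    then obtain f where f: "continuous_on (sphere 0 1) f" "g = (\<lambda>E. radon f (orthogonal_comp E))"
      by (auto simp: Csphere_def)
    show "g \<in> sup_closure ?G ((\<lambda>f E. radon f E) ` Csphere)"
      unfolding sup_closure_def
    proof (intro CollectI allI impI)
      fix e :: real assume e: "e > 0"
      obtain h where h: "continuous_on (sphere 0 1) h"
          "\<forall>E \<in> ?G. \<bar>radon f (orthogonal_comp E) - radon h E\<bar> \<le> e"
        using main_approx[OF assms f(1) e] by blast
      show "\<exists>h\<in>(\<lambda>f E. radon f E) ` Csphere. \<forall>E\<in>?G. \<bar>g E - h E\<bar> \<le> e"
        using h f(2) by (intro bexI[of _ "\<lambda>E. radon h E"]) (auto simp: Csphere_def)
    qed
  qed
  show "sup_closure ?G ((\<lambda>f E. radon f E) ` Csphere) \<subseteq> sup_closure ?G ((\<lambda>f E. radon f (orthogonal_comp E)) ` Csphere)"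
  proof (rule closure_mono_lemma)
    fix g :: "(real^'n) set \<Rightarrow> real" assume "g \<in> (\<lambda>f E. radon f E) ` Csphere"
    then obtain f where f: "continuous_on (sphere 0 1) f" "g = (\<lambda>E. radon f E)"
      by (auto simp: Csphere_def)
    define m where "m = CARD('n) - k"
    have m: "1 \<le> m" "m \<le> CARD('n) - 1" "CARD('n) - m = k" using assms by (auto simp: m_def)
    show "g \<in> sup_closure ?G ((\<lambda>f E. radon f (orthogonal_comp E)) ` Csphere)"
      unfolding sup_closure_def
    proof (intro CollectI allI impI)
      fix e :: real assume e: "e > 0"
      obtain h where h: "continuous_on (sphere 0 1) h"
          "\<forall>E \<in> (grassmannian (CARD('n) - m) :: (real^'n) set set). \<bar>radon f (orthogonal_comp E) - radon h E\<bar> \<le> e"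
        using main_approx[OF m(1,2) f(1) e] by blast
      have "\<bar>g E - radon h (orthogonal_comp E)\<bar> \<le> e" if E: "E \<in> ?G" for E
      proof -
        have Es: "subspace E" "dim E = m" using E by (auto simp: grassmannian_def m_def)
        have "dim (orthogonal_comp E) + dim E = CARD('n)" using dim_orth_comp[OF Es(1)] by simp
        then have "orthogonal_comp E \<in> (grassmannian (CARD('n) - m) :: (real^'n) set set)"
          using Es subspace_orthogonal_comp by (auto simp: grassmannian_def m_def)
        then have "\<bar>radon f (orthogonal_comp (orthogonal_comp E)) - radon h (orthogonal_comp E)\<bar> \<le> e"
          using h(2) by blast
        then show ?thesis using orthogonal_comp_self[OF Es(1)] f(2) by simp
      qed
      then show "\<exists>h\<in>(\<lambda>f E. radon f (orthogonal_comp E)) ` Csphere. \<forall>E\<in>?G. \<bar>g E - h E\<bar> \<le> e"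
        using h(1) by (intro bexI[of _ "\<lambda>E. radon h (orthogonal_comp E)"]) (auto simp: Csphere_def)
    qed
  qed
qed

end
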